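(* Let $(M,g)$ be a 2-dimensional Riemannian manifold, $\lambda\in\mathbb{R}$, $X$ a smooth vector field satisfying $R_{ab}=\tfrac12X_aX_b-\nabla_{(a}X_{b)}+\lambda g_{ab}$, and $\Gamma>0$ a smooth function such that $K_a=\Gamma X_a+\nabla_a\Gamma$ is a Killing vector field of $g$. Then, with $R$ the scalar curvature of $g$, $$\Big(R-\frac{2\lambda}{3}\Big)\nabla_d\Gamma+\frac{2\Gamma}{3}\nabla_dR=2K^b\nabla_{[d}X_{b]},$$ and consequently $\big(R-\tfrac{2\lambda}{3}\big)\mathcal{L}_K\Gamma=0$.
   Context: $\nabla$ is the Levi-Civita connection of $g$; $[db]$ denotes antisymmetrisation with weight $1/2$. *)

theory Defs
  imports "HOL-Analysis.Analysis"
begin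

text \<open>Local-coordinate rendering of 2-dimensional Riemannian geometry.\<close>

type_synonym pt = "real^2"
type_synonym idx = "2"

definition pd :: "idx \<Rightarrow> (pt \<Rightarrow> real) \<Rightarrow> pt \<Rightarrow> real" where
  "pd i f x = deriv (\<lambda>t. f (x + t *\<^sub>R axis i 1)) 0"

definition smooth_on :: "pt set \<Rightarrow> (pt \<Rightarrow> real) \<Rightarrow> bool" where
  "smooth_on U f \<longleftrightarrow> (\<forall>is :: idx list. foldr pd is f differentiable_on U)"

definition riem_metric :: "pt set \<Rightarrow> (pt \<Rightarrow> idx \<Rightarrow> idx \<Rightarrow> real) \<Rightarrow> bool" where
  "riem_metric U g \<longleftrightarrow> open U \<and>
     (\<forall>i j. smooth_on U (\<lambda>x. g x i j)) \<and>
     (\<forall>x\<in>U. \<forall>i j. g x i j = g x j i) \<and>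
     (\<forall>x\<in>U. \<forall>v::real^2. v \<noteq> 0 \<longrightarrow> (\<Sum>i\<in>UNIV. \<Sum>j\<in>UNIV. g x i j * v$i * v$j) > 0)"

definition ginv :: "(pt \<Rightarrow> idx \<Rightarrow> idx \<Rightarrow> real) \<Rightarrow> pt \<Rightarrow> idx \<Rightarrow> idx \<Rightarrow> real" where
  "ginv g x i j = matrix_inv (\<chi> a b. g x a b) $ i $ j"

definition christ :: "(pt \<Rightarrow> idx \<Rightarrow> idx \<Rightarrow> real) \<Rightarrow> pt \<Rightarrow> idx \<Rightarrow> idx \<Rightarrow> idx \<Rightarrow> real" where
  "christ g x k i j = (1/2) * (\<Sum>l\<in>UNIV. ginv g x k l *
      (pd i (\<lambda>y. g y j l) x + pd j (\<lambda>y. g y i l) x - pd l (\<lambda>y. g y i j) x))"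

definition riemann :: "(pt \<Rightarrow> idx \<Rightarrow> idx \<Rightarrow> real) \<Rightarrow> pt \<Rightarrow> idx \<Rightarrow> idx \<Rightarrow> idx \<Rightarrow> idx \<Rightarrow> real" where
  "riemann g x r s m n =
     pd m (\<lambda>y. christ g y r n s) x - pd n (\<lambda>y. christ g y r m s) x
     + (\<Sum>l\<in>UNIV. christ g x r m l * christ g x l n s)
     - (\<Sum>l\<in>UNIV. christ g x r n l * christ g x l m s)"

text \<open>Ricci tensor R_{sn} = R^r_{srn} (positive for round spheres).\<close>
definition ricci :: "(pt \<Rightarrow> idx \<Rightarrow> idx \<Rightarrow> real) \<Rightarrow> pt \<Rightarrow> idx \<Rightarrow> idx \<Rightarrow> real" where
  "ricci g x s n = (\<Sum>r\<in>UNIV. riemann g x r s r n)"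

definition scal :: "(pt \<Rightarrow> idx \<Rightarrow> idx \<Rightarrow> real) \<Rightarrow> pt \<Rightarrow> real" where
  "scal g x = (\<Sum>a\<in>UNIV. \<Sum>b\<in>UNIV. ginv g x a b * ricci g x a b)"

definition cov1 :: "(pt \<Rightarrow> idx \<Rightarrow> idx \<Rightarrow> real) \<Rightarrow> (pt \<Rightarrow> idx \<Rightarrow> real) \<Rightarrow> pt \<Rightarrow> idx \<Rightarrow> idx \<Rightarrow> real" where
  "cov1 g X x a b = pd a (\<lambda>y. X y b) x - (\<Sum>c\<in>UNIV. christ g x c a b * X x c)"

definition raise :: "(pt \<Rightarrow> idx \<Rightarrow> idx \<Rightarrow> real) \<Rightarrow> (pt \<Rightarrow> idx \<Rightarrow> real) \<Rightarrow> pt \<Rightarrow> idx \<Rightarrow> real" where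
  "raise g K x a = (\<Sum>b\<in>UNIV. ginv g x a b * K x b)"

definition killing :: "pt set \<Rightarrow> (pt \<Rightarrow> idx \<Rightarrow> idx \<Rightarrow> real) \<Rightarrow> (pt \<Rightarrow> idx \<Rightarrow> real) \<Rightarrow> bool" where
  "killing U g K \<longleftrightarrow> (\<forall>a. smooth_on U (\<lambda>x. K x a)) \<and>
     (\<forall>x\<in>U. \<forall>a b. cov1 g K x a b + cov1 g K x b a = 0)"

end

theory Submission
  imports Defs
begin


abbreviation ax :: "idx \<Rightarrow> real^2" where "ax i \<equiv> axis i (1::real)"

lemma pd_has_deriv:
  assumes "f differentiable at x"
  shows "((\<lambda>t. f (x + t *\<^sub>R ax i)) has_real_derivative pd i f x) (at 0)"
proof -
  have h: "(\<lambda>t::real. x + t *\<^sub>R ax i) differentiable at 0"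
    by (intro derivative_intros)
  have "f differentiable at ((\<lambda>t::real. x + t *\<^sub>R ax i) 0)" using assms by simp
  from differentiable_chain_at[OF h this]
  have "(\<lambda>t. f (x + t *\<^sub>R ax i)) differentiable at 0" by (simp add: o_def)
  then show ?thesis unfolding pd_def
    by (simp add: DERIV_deriv_iff_real_differentiable)
qed

lemma pd_eqI:
  assumes "((\<lambda>t. f (x + t *\<^sub>R ax i)) has_real_derivative D) (at 0)"
  shows "pd i f x = D"
  unfolding pd_def using assms by (rule DERIV_imp_deriv)

lemma pd_add: "f differentiable at x \<Longrightarrow> g differentiable at x \<Longrightarrow>
   pd i (\<lambda>y. f y + g y) x = pd i f x + pd i g x"
  by (rule pd_eqI, intro DERIV_add pd_has_deriv)

lemma pd_diff: "f differentiable at x \<Longrightarrow> g differentiable at x \<Longrightarrow>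
   pd i (\<lambda>y. f y - g y) x = pd i f x - pd i g x"
  by (rule pd_eqI, intro DERIV_diff pd_has_deriv)

lemma pd_mult: "f differentiable at x \<Longrightarrow> g differentiable at x \<Longrightarrow>
   pd i (\<lambda>y. f y * g y) x = pd i f x * g x + f x * pd i g x"
  by (rule pd_eqI, rule DERIV_mult[THEN DERIV_cong], (rule pd_has_deriv, assumption)+, simp)

lemma pd_const: "pd i (\<lambda>y. c) x = 0"
  by (rule pd_eqI, simp)

lemma pd_cmult: "f differentiable at x \<Longrightarrow> pd i (\<lambda>y. c * f y) x = c * pd i f x"
  by (rule pd_eqI, rule DERIV_cmult, rule pd_has_deriv)

lemma pd_minus: "f differentiable at x \<Longrightarrow> pd i (\<lambda>y. - f y) x = - pd i f x"
  by (rule pd_eqI, rule DERIV_minus, rule pd_has_deriv)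

lemma pd_divide: "f differentiable at x \<Longrightarrow> g differentiable at x \<Longrightarrow> g x \<noteq> 0 \<Longrightarrow>
   pd i (\<lambda>y. f y / g y) x = (pd i f x * g x - f x * pd i g x) / (g x * g x)"
  by (rule pd_eqI, rule DERIV_divide[THEN DERIV_cong], (rule pd_has_deriv, assumption)+, simp_all add: power2_eq_square)

lemma pd_sum: "finite A \<Longrightarrow> (\<And>a. a \<in> A \<Longrightarrow> f a differentiable at x) \<Longrightarrow>
   pd i (\<lambda>y. \<Sum>a\<in>A. f a y) x = (\<Sum>a\<in>A. pd i (f a) x)"
  by (rule pd_eqI, rule DERIV_sum, rule pd_has_deriv, auto)

lemma pd_local:
  assumes "open U" "x \<in> U" "\<And>y. y \<in> U \<Longrightarrow> f y = g y"
  shows "pd i f x = pd i g x"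
proof -
  have "continuous (at 0) (\<lambda>t::real. x + t *\<^sub>R ax i)" by (intro continuous_intros)
  moreover have "open ((\<lambda>t::real. x + t *\<^sub>R ax i) -` U)" 
    by (intro continuous_open_vimage assms(1) continuous_intros)
  hence "\<forall>\<^sub>F t in nhds 0. t \<in> ((\<lambda>t::real. x + t *\<^sub>R ax i) -` U)"
    using assms(2) by (intro eventually_nhds_in_open) auto
  hence "\<forall>\<^sub>F t in nhds 0. f (x + t *\<^sub>R ax i) = g (x + t *\<^sub>R ax i)"
    by eventually_elim (use assms in auto)
  thus ?thesis unfolding pd_def by (rule deriv_cong_ev) simp
qed


lemma diff_on_cong:
  assumes "f differentiable_on U" "\<And>y. y \<in> U \<Longrightarrow> f y = g y"
  shows "g differentiable_on U"
  unfolding differentiable_on_def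
proof
  fix x assume x: "x \<in> U"
  show "g differentiable at x within U"
    by (rule differentiable_transform_within[of f x U 1 g]) (use assms x in \<open>auto simp: differentiable_on_def\<close>)
qed

lemma foldr_pd_local:
  assumes "open U" "\<And>y. y \<in> U \<Longrightarrow> f y = g y"
  shows "y \<in> U \<Longrightarrow> foldr pd is f y = foldr pd is g y"
proof (induction "is" arbitrary: y)
  case Nil thus ?case using assms by simp
next
  case (Cons i js)
  have "pd i (foldr pd js f) y = pd i (foldr pd js g) y"
    by (rule pd_local[OF assms(1) Cons.prems]) (use Cons.IH in auto)
  thus ?case by simp
qed

lemma diff_on_divide: "f differentiable_on U \<Longrightarrow> g differentiable_on U \<Longrightarrow> (\<forall>y\<in>U. g y \<noteq> 0) \<Longrightarrow>
  (\<lambda>y. f y / (g y::real)) differentiable_on U"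
  unfolding differentiable_on_def by (auto intro!: differentiable_divide)

definition Dn :: "pt set \<Rightarrow> nat \<Rightarrow> (pt \<Rightarrow> real) \<Rightarrow> bool" where
  "Dn U n f \<longleftrightarrow> (\<forall>is::idx list. length is \<le> n \<longrightarrow> foldr pd is f differentiable_on U)"

lemma Dn_cong: assumes "open U" "Dn U n f" "\<And>y. y \<in> U \<Longrightarrow> f y = g y" shows "Dn U n g"
  unfolding Dn_def
proof (intro allI impI)
  fix "is" :: "idx list" assume "length is \<le> n"
  hence "foldr pd is f differentiable_on U" using assms(2) unfolding Dn_def by blast
  thus "foldr pd is g differentiable_on U"
    by (rule diff_on_cong) (rule foldr_pd_local[OF assms(1,3)])
qed

lemma Dn_mono: "Dn U (Suc n) f \<Longrightarrow> Dn U n f"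
  unfolding Dn_def by auto

lemma Dn_pd: "Dn U (Suc n) f \<Longrightarrow> Dn U n (pd i f)"
  unfolding Dn_def
proof (intro allI impI)
  fix "is" :: "idx list" assume A: "\<forall>is::idx list. length is \<le> Suc n \<longrightarrow> foldr pd is f differentiable_on U"
    and "length is \<le> n"
  hence "foldr pd (is @ [i]) f differentiable_on U" using A[rule_format, of "is @ [i]"] by simp
  thus "foldr pd is (pd i f) differentiable_on U" by simp
qed

lemma Dn_0: "Dn U n f \<Longrightarrow> f differentiable_on U"
  unfolding Dn_def by (drule spec[of _ "[]"]) simp

lemma Dn_at: "open U \<Longrightarrow> Dn U n f \<Longrightarrow> x \<in> U \<Longrightarrow> f differentiable at x"
  using Dn_0 differentiable_on_eq_differentiable_at by blast

lemma Dn_SucI: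
  assumes "f differentiable_on U" "\<And>i. Dn U n (pd i f)"
  shows "Dn U (Suc n) f"
  unfolding Dn_def
proof (intro allI impI)
  fix "is" :: "idx list" assume "length is \<le> Suc n"
  show "foldr pd is f differentiable_on U"
  proof (cases "is" rule: rev_cases)
    case Nil thus ?thesis using assms by simp
  next
    case (snoc js i)
    with \<open>length is \<le> Suc n\<close> have "length js \<le> n" by simp
    with assms(2)[of i] have "foldr pd js (pd i f) differentiable_on U" unfolding Dn_def by auto
    thus ?thesis using snoc by simp
  qed
qed

lemma pd_const_fun: "pd i (\<lambda>y. c) = (\<lambda>y. 0)"
  by (rule ext, rule pd_const)

lemma Dn_const: "Dn U n (\<lambda>y. c)"
proof (induction n arbitrary: c)
  case 0 thus ?case unfolding Dn_def by auto
next
  case (Suc n) show ?case by (rule Dn_SucI) (auto simp: pd_const_fun Suc.IH)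
qed

lemma Dn_0_iff: "Dn U 0 f \<longleftrightarrow> f differentiable_on U"
  unfolding Dn_def by simp

lemma Dn_closed:
  assumes "open U"
  shows "(Dn U n f \<and> Dn U n g \<longrightarrow> Dn U n (\<lambda>y. f y + g y)) \<and>
         (Dn U n f \<and> Dn U n g \<longrightarrow> Dn U n (\<lambda>y. f y * g y)) \<and>
         (Dn U n f \<and> Dn U n g \<and> (\<forall>y\<in>U. g y \<noteq> 0) \<longrightarrow> Dn U n (\<lambda>y. f y / g y))"
proof (induction n arbitrary: f g)
  case 0
  have 1: "f differentiable_on U \<Longrightarrow> g differentiable_on U \<Longrightarrow> (\<lambda>y. f y + g y) differentiable_on U"
    by (rule differentiable_on_add)
  have 2: "f differentiable_on U \<Longrightarrow> g differentiable_on U \<Longrightarrow> (\<lambda>y. f y * g y) differentiable_on U"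
    by (rule differentiable_on_mult)
  show ?case unfolding Dn_0_iff using 1 2 diff_on_divide by blast
next
  case (Suc n)
  have IHa: "Dn U n (\<lambda>y. f y + g y)" if "Dn U n f" "Dn U n g" for f g
    using Suc.IH[of f g] that by simp
  have IHm: "Dn U n (\<lambda>y. f y * g y)" if "Dn U n f" "Dn U n g" for f g
    using Suc.IH[of f g] that by simp
  have IHd: "Dn U n (\<lambda>y. f y / g y)" if "Dn U n f" "Dn U n g" "\<forall>y\<in>U. g y \<noteq> 0" for f g
    using Suc.IH[of f g] that by simp
  have add: "Dn U (Suc n) (\<lambda>y. f y + g y)" if F: "Dn U (Suc n) f" and G: "Dn U (Suc n) g" for f g
  proof (rule Dn_SucI)
    show "(\<lambda>y. f y + g y) differentiable_on U" using Dn_0[OF F] Dn_0[OF G] by (rule differentiable_on_add)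
    fix i
    have "Dn U n (\<lambda>y. pd i f y + pd i g y)" by (rule IHa[OF Dn_pd[OF F] Dn_pd[OF G]])
    thus "Dn U n (pd i (\<lambda>y. f y + g y))"
      by (rule Dn_cong[OF assms]) (simp add: pd_add Dn_at[OF assms F] Dn_at[OF assms G])
  qed
  have mult: "Dn U (Suc n) (\<lambda>y. f y * g y)" if F: "Dn U (Suc n) f" and G: "Dn U (Suc n) g" for f g
  proof (rule Dn_SucI)
    show "(\<lambda>y. f y * g y) differentiable_on U" using Dn_0[OF F] Dn_0[OF G] by (rule differentiable_on_mult)
    fix i
    have "Dn U n (\<lambda>y. pd i f y * g y + f y * pd i g y)"
      by (rule IHa[OF IHm[OF Dn_pd[OF F] Dn_mono[OF G]] IHm[OF Dn_mono[OF F] Dn_pd[OF G]]])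
    thus "Dn U n (pd i (\<lambda>y. f y * g y))"
      by (rule Dn_cong[OF assms]) (simp add: pd_mult Dn_at[OF assms F] Dn_at[OF assms G])
  qed
  have div: "Dn U (Suc n) (\<lambda>y. f y / g y)" if F: "Dn U (Suc n) f" and G: "Dn U (Suc n) g"
    and nz: "\<forall>y\<in>U. g y \<noteq> 0" for f g
  proof (rule Dn_SucI)
    show "(\<lambda>y. f y / g y) differentiable_on U" using Dn_0[OF F] Dn_0[OF G] nz by (rule diff_on_divide)
    fix i
    have a: "Dn U n (\<lambda>y. pd i f y * g y + (-1) * (f y * pd i g y))"
      by (rule IHa[OF IHm[OF Dn_pd[OF F] Dn_mono[OF G]] IHm[OF Dn_const IHm[OF Dn_mono[OF F] Dn_pd[OF G]]]])
    have b: "Dn U n (\<lambda>y. g y * g y)" by (rule IHm[OF Dn_mono[OF G] Dn_mono[OF G]])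
    have "Dn U n (\<lambda>y. (pd i f y * g y + (-1) * (f y * pd i g y)) / (g y * g y))"
      by (rule IHd[OF a b]) (use nz in simp)
    thus "Dn U n (pd i (\<lambda>y. f y / g y))"
    proof (rule Dn_cong[OF assms])
      fix y assume y: "y \<in> U"
      have "pd i (\<lambda>y. f y / g y) y = (pd i f y * g y - f y * pd i g y) / (g y * g y)"
        by (rule pd_divide[OF Dn_at[OF assms F y] Dn_at[OF assms G y]]) (use nz y in blast)
      thus "(pd i f y * g y + (-1) * (f y * pd i g y)) / (g y * g y) = pd i (\<lambda>y. f y / g y) y"
        by simp
    qed
  qed
  show ?case using add[of f g] mult[of f g] div[of f g] by simp
qed

lemma smooth_Dn: "smooth_on U f \<longleftrightarrow> (\<forall>n. Dn U n f)"
  unfolding smooth_on_def Dn_def by auto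

context fixes U :: "pt set" assumes opU: "open U"
begin

lemma sm_add: "smooth_on U f \<Longrightarrow> smooth_on U g \<Longrightarrow> smooth_on U (\<lambda>y. f y + g y)"
  using Dn_closed[OF opU] unfolding smooth_Dn by blast
lemma sm_mult: "smooth_on U f \<Longrightarrow> smooth_on U g \<Longrightarrow> smooth_on U (\<lambda>y. f y * g y)"
  using Dn_closed[OF opU] unfolding smooth_Dn by blast
lemma sm_div: "smooth_on U f \<Longrightarrow> smooth_on U g \<Longrightarrow> (\<forall>y\<in>U. g y \<noteq> 0) \<Longrightarrow> smooth_on U (\<lambda>y. f y / g y)"
  using Dn_closed[OF opU] unfolding smooth_Dn by blast
lemma sm_const: "smooth_on U (\<lambda>y. c)"
  using Dn_const unfolding smooth_Dn by blast
lemma sm_cmult: "smooth_on U f \<Longrightarrow> smooth_on U (\<lambda>y. c * f y)"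
  using sm_mult[OF sm_const] by blast
lemma sm_minus: "smooth_on U f \<Longrightarrow> smooth_on U (\<lambda>y. - f y)"
  using sm_cmult[of f "-1"] by simp
lemma sm_diff: "smooth_on U f \<Longrightarrow> smooth_on U g \<Longrightarrow> smooth_on U (\<lambda>y. f y - g y)"
  using sm_add[OF _ sm_minus, of f g] by simp
lemma sm_pd: "smooth_on U f \<Longrightarrow> smooth_on U (pd i f)"
  unfolding smooth_Dn using Dn_pd by blast
lemma sm_at: "smooth_on U f \<Longrightarrow> x \<in> U \<Longrightarrow> f differentiable at x"
  unfolding smooth_Dn using Dn_at[OF opU] by blast
lemma sm_cong: "smooth_on U f \<Longrightarrow> (\<And>y. y \<in> U \<Longrightarrow> f y = g y) \<Longrightarrow> smooth_on U g"
  unfolding smooth_Dn using Dn_cong[OF opU] by blast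
lemma sm_sum: "finite A \<Longrightarrow> (\<And>a. a \<in> A \<Longrightarrow> smooth_on U (f a)) \<Longrightarrow> smooth_on U (\<lambda>y. \<Sum>a\<in>A. f a y)"
  by (induction A rule: finite_induct) (auto intro: sm_add sm_const)
lemma sm_sum2: "(\<And>a. smooth_on U (f a)) \<Longrightarrow> smooth_on U (\<lambda>y. \<Sum>a\<in>(UNIV::idx set). f a y)"
  by (rule sm_sum) auto

end


lemma line_deriv:
  assumes "f differentiable at (z + s *\<^sub>R ax i)"
  shows "((\<lambda>s. f (z + s *\<^sub>R ax i)) has_real_derivative pd i f (z + s *\<^sub>R ax i)) (at s)"
proof -
  have "((\<lambda>t. f ((z + s *\<^sub>R ax i) + t *\<^sub>R ax i)) has_real_derivative pd i f (z + s *\<^sub>R ax i)) (at 0)"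
    by (rule pd_has_deriv[OF assms])
  moreover have eq: "\<And>t. f ((z + s *\<^sub>R ax i) + t *\<^sub>R ax i) = f (z + (t + s) *\<^sub>R ax i)"
    by (simp add: scaleR_add_left algebra_simps)
  ultimately have "((\<lambda>t. f (z + (t + s) *\<^sub>R ax i)) has_real_derivative pd i f (z + s *\<^sub>R ax i)) (at 0)"
    by (simp only: eq)
  hence "((\<lambda>t. (\<lambda>s. f (z + s *\<^sub>R ax i)) (t + s)) has_real_derivative pd i f (z + s *\<^sub>R ax i)) (at 0)"
    by simp
  thus ?thesis using DERIV_shift[of "\<lambda>s. f (z + s *\<^sub>R ax i)" _ 0 s] by simp
qed

lemma norm_ax: "norm (ax i) = 1"
  by simp

lemma dist_add_self1: "dist x (x + v) = norm (v::real^2)"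
  by (metis add.right_neutral dist_add_cancel dist_0_norm)
lemma dist_add_self2: "dist (x + v) x = norm (v::real^2)"
  by (metis dist_commute dist_add_self1)
lemma mvt_line:
  fixes F :: "real \<Rightarrow> real"
  assumes "0 < h" "\<And>s. 0 \<le> s \<Longrightarrow> s \<le> h \<Longrightarrow> (F has_real_derivative F' s) (at s)"
  shows "\<exists>s. 0 < s \<and> s < h \<and> F h - F 0 = h * F' s"
proof -
  have "continuous_on {0..h} F"
  proof (intro continuous_at_imp_continuous_on ballI)
    fix s assume "s \<in> {0..h}" thus "isCont F s" using DERIV_isCont[OF assms(2)] by auto
  qed
  moreover have "F differentiable at x" if "0 < x" "x < h" for x
    using assms(2)[of x] that unfolding real_differentiable_def by auto
  ultimately obtain l z where z: "0 < z" "z < h" "(F has_real_derivative l) (at z)" "F h - F 0 = (h - 0) * l"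
    using MVT[OF assms(1)] by blast
  have "l = F' z" using DERIV_unique[OF z(3) assms(2)] z by simp
  thus ?thesis using z by auto
qed
lemma mvt2:
  assumes U: "open U" and sm: "smooth_on U f" and r: "0 < r" "ball x r \<subseteq> U"
    and h: "0 < h" "2 * h < r"
  shows "\<exists>p. dist p x \<le> 2 * h \<and>
     f (x + h *\<^sub>R ax i + h *\<^sub>R ax j) - f (x + h *\<^sub>R ax i) - f (x + h *\<^sub>R ax j) + f x
       = h * h * pd j (pd i f) p"
proof -
  have inU: "x + s *\<^sub>R ax i + t *\<^sub>R ax j \<in> U" if "0 \<le> s" "s \<le> h" "0 \<le> t" "t \<le> h" for s t
  proof -
    have "norm (s *\<^sub>R ax i + t *\<^sub>R ax j) \<le> norm (s *\<^sub>R ax i) + norm (t *\<^sub>R ax j)"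
      by (rule norm_triangle_ineq)
    also have "\<dots> = s + t" using that by (simp add: norm_ax)
    finally have "norm (s *\<^sub>R ax i + t *\<^sub>R ax j) < r" using that h by simp
    moreover have "dist x (x + (s *\<^sub>R ax i + t *\<^sub>R ax j)) = norm (s *\<^sub>R ax i + t *\<^sub>R ax j)"
      by (rule dist_add_self1)
    ultimately have "x + (s *\<^sub>R ax i + t *\<^sub>R ax j) \<in> ball x r" by simp
    hence "x + s *\<^sub>R ax i + t *\<^sub>R ax j \<in> ball x r" by (simp add: add.assoc)
    thus ?thesis using r by blast
  qed
  have dist_le: "dist (x + s *\<^sub>R ax i + t *\<^sub>R ax j) x \<le> 2 * h" if "0 \<le> s" "s \<le> h" "0 \<le> t" "t \<le> h" for s t
  proof -
    have "norm (s *\<^sub>R ax i + t *\<^sub>R ax j) \<le> norm (s *\<^sub>R ax i) + norm (t *\<^sub>R ax j)"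
      by (rule norm_triangle_ineq)
    also have "\<dots> = s + t" using that by (simp add: norm_ax)
    moreover have "dist (x + (s *\<^sub>R ax i + t *\<^sub>R ax j)) x = norm (s *\<^sub>R ax i + t *\<^sub>R ax j)"
      by (rule dist_add_self2)
    ultimately show ?thesis using that by (simp add: add.assoc)
  qed
  have sdiff: "g differentiable at y" if "smooth_on U g" "y \<in> U" for g y
    using sm_at[OF U that] .
  have smi: "smooth_on U (pd i f)" by (rule sm_pd[OF U sm])
  define \<phi> where "\<phi> s = f (x + h *\<^sub>R ax j + s *\<^sub>R ax i) - f (x + s *\<^sub>R ax i)" for s
  have "\<exists>\<xi>. 0 < \<xi> \<and> \<xi> < h \<and> \<phi> h - \<phi> 0 = h * (pd i f (x + h *\<^sub>R ax j + \<xi> *\<^sub>R ax i) - pd i f (x + \<xi> *\<^sub>R ax i))"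
    unfolding \<phi>_def
  proof (rule mvt_line[OF h(1)])
    fix s assume s: "0 \<le> s" "s \<le> h"
    have a: "x + h *\<^sub>R ax j + s *\<^sub>R ax i \<in> U" using inU[OF s, of h] h by (simp add: add_ac)
    have b: "x + s *\<^sub>R ax i \<in> U" using inU[OF s, of 0] h by simp
    show "((\<lambda>s. f (x + h *\<^sub>R ax j + s *\<^sub>R ax i) - f (x + s *\<^sub>R ax i)) has_real_derivative
        pd i f (x + h *\<^sub>R ax j + s *\<^sub>R ax i) - pd i f (x + s *\<^sub>R ax i)) (at s)"
      by (intro DERIV_diff line_deriv sdiff[OF sm] a b)
  qed
  then obtain \<xi> where xi: "0 < \<xi>" "\<xi> < h"
    and e1: "\<phi> h - \<phi> 0 = h * (pd i f (x + h *\<^sub>R ax j + \<xi> *\<^sub>R ax i) - pd i f (x + \<xi> *\<^sub>R ax i))" by blast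
  define \<psi> where "\<psi> t = pd i f (x + \<xi> *\<^sub>R ax i + t *\<^sub>R ax j)" for t
  have "\<exists>\<eta>. 0 < \<eta> \<and> \<eta> < h \<and> \<psi> h - \<psi> 0 = h * pd j (pd i f) (x + \<xi> *\<^sub>R ax i + \<eta> *\<^sub>R ax j)"
    unfolding \<psi>_def
  proof (rule mvt_line[OF h(1)])
    fix t assume t: "0 \<le> t" "t \<le> h"
    have a: "x + \<xi> *\<^sub>R ax i + t *\<^sub>R ax j \<in> U" using inU[of \<xi> t] xi t by simp
    show "((\<lambda>t. pd i f (x + \<xi> *\<^sub>R ax i + t *\<^sub>R ax j)) has_real_derivative
        pd j (pd i f) (x + \<xi> *\<^sub>R ax i + t *\<^sub>R ax j)) (at t)"
      by (intro line_deriv sdiff[OF smi] a)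
  qed
  then obtain \<eta> where eta: "0 < \<eta>" "\<eta> < h"
    and e2: "\<psi> h - \<psi> 0 = h * pd j (pd i f) (x + \<xi> *\<^sub>R ax i + \<eta> *\<^sub>R ax j)" by blast
  have "f (x + h *\<^sub>R ax i + h *\<^sub>R ax j) - f (x + h *\<^sub>R ax i) - f (x + h *\<^sub>R ax j) + f x = \<phi> h - \<phi> 0"
    unfolding \<phi>_def by (simp add: add_ac)
  also have "\<dots> = h * (\<psi> h - \<psi> 0)" unfolding e1 \<psi>_def by (simp add: add_ac)
  also have "\<dots> = h * h * pd j (pd i f) (x + \<xi> *\<^sub>R ax i + \<eta> *\<^sub>R ax j)" unfolding e2 by simp
  finally show ?thesis using dist_le[of \<xi> \<eta>] xi eta by auto
qed

lemma schwarz: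
  assumes U: "open U" and sm: "smooth_on U f" and x: "x \<in> U"
  shows "pd i (pd j f) x = pd j (pd i f) x"
proof (rule ccontr)
  assume ne: "pd i (pd j f) x \<noteq> pd j (pd i f) x"
  define \<epsilon> where "\<epsilon> = \<bar>pd i (pd j f) x - pd j (pd i f) x\<bar> / 2"
  have ep: "0 < \<epsilon>" using ne unfolding \<epsilon>_def by simp
  obtain r where r: "0 < r" "ball x r \<subseteq> U" using U x open_contains_ball by blast
  have c1: "isCont (pd j (pd i f)) x"
    by (rule differentiable_imp_continuous_within, rule sm_at[OF U _ x], intro sm_pd[OF U] sm)
  have c2: "isCont (pd i (pd j f)) x"
    by (rule differentiable_imp_continuous_within, rule sm_at[OF U _ x], intro sm_pd[OF U] sm)
  obtain d1 where d1: "0 < d1" "\<And>p. dist p x < d1 \<Longrightarrow> dist (pd j (pd i f) p) (pd j (pd i f) x) < \<epsilon>"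
    using c1 ep unfolding continuous_at_eps_delta by blast
  obtain d2 where d2: "0 < d2" "\<And>p. dist p x < d2 \<Longrightarrow> dist (pd i (pd j f) p) (pd i (pd j f) x) < \<epsilon>"
    using c2 ep unfolding continuous_at_eps_delta by blast
  define h where "h = min r (min d1 d2) / 4"
  have h: "0 < h" "2 * h < r" "2 * h < d1" "2 * h < d2" using r d1 d2 unfolding h_def by auto
  obtain p where p: "dist p x \<le> 2 * h"
    "f (x + h *\<^sub>R ax i + h *\<^sub>R ax j) - f (x + h *\<^sub>R ax i) - f (x + h *\<^sub>R ax j) + f x
       = h * h * pd j (pd i f) p"
    using mvt2[OF U sm r h(1,2), of i j] by blast
  obtain q where q: "dist q x \<le> 2 * h"
    "f (x + h *\<^sub>R ax j + h *\<^sub>R ax i) - f (x + h *\<^sub>R ax j) - f (x + h *\<^sub>R ax i) + f x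
       = h * h * pd i (pd j f) q"
    using mvt2[OF U sm r h(1,2), of j i] by blast
  have e: "f (x + h *\<^sub>R ax j + h *\<^sub>R ax i) = f (x + h *\<^sub>R ax i + h *\<^sub>R ax j)" by (simp add: add_ac)
  have "h * h * pd j (pd i f) p = h * h * pd i (pd j f) q"
    using p(2) q(2) e by linarith
  hence eq: "pd j (pd i f) p = pd i (pd j f) q" using h(1) by simp
  have "dist (pd j (pd i f) p) (pd j (pd i f) x) < \<epsilon>" using d1(2) p(1) h by simp
  moreover have "dist (pd i (pd j f) q) (pd i (pd j f) x) < \<epsilon>" using d2(2) q(1) h by simp
  ultimately have "\<bar>pd i (pd j f) x - pd j (pd i f) x\<bar> < 2 * \<epsilon>"
    using eq unfolding dist_real_def by linarith
  thus False unfolding \<epsilon>_def by simp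
qed


definition gdet :: "(pt \<Rightarrow> idx \<Rightarrow> idx \<Rightarrow> real) \<Rightarrow> pt \<Rightarrow> real" where
  "gdet g y = g y 1 1 * g y 2 2 - g y 1 2 * g y 2 1"

definition ginvE :: "(pt \<Rightarrow> idx \<Rightarrow> idx \<Rightarrow> real) \<Rightarrow> pt \<Rightarrow> idx \<Rightarrow> idx \<Rightarrow> real" where
  "ginvE g y i j = (if i = 1 \<and> j = 1 then g y 2 2 else if i = 2 \<and> j = 2 then g y 1 1 else - g y i j) / gdet g y"

lemma two_cases: "(i::2) = 1 \<or> i = 2" by (rule exhaust_2)

lemma ginvE_simps:
  "ginvE g y 1 1 = g y 2 2 / gdet g y" "ginvE g y 2 2 = g y 1 1 / gdet g y"
  "ginvE g y 1 2 = - g y 1 2 / gdet g y" "ginvE g y 2 1 = - g y 2 1 / gdet g y"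
  unfolding ginvE_def by auto

lemma matrix_inv_eqI:
  fixes A B :: "real^2^2"
  assumes "A ** B = mat 1" "B ** A = mat 1"
  shows "matrix_inv A = B"
proof -
  have ex: "\<exists>A'. A ** A' = mat 1 \<and> A' ** A = mat 1" using assms by blast
  define C where "C = matrix_inv A"
  have C: "A ** C = mat 1" "C ** A = mat 1"
    using someI_ex[OF ex] unfolding C_def matrix_inv_def by auto
  have "C = C ** (A ** B)" using assms by (simp add: matrix_mul_rid)
  also have "\<dots> = (C ** A) ** B" by (simp add: matrix_mul_assoc)
  also have "\<dots> = B" using C by (simp add: matrix_mul_lid)
  finally show ?thesis unfolding C_def .
qed

lemma ginv_eq:
  assumes "gdet g y \<noteq> 0"
  shows "ginv g y i j = ginvE g y i j"
proof -
  define B :: "real^2^2" where "B = (\<chi> a b. ginvE g y a b)"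
  have 1: "(\<chi> a b. g y a b) ** B = mat 1"
    unfolding B_def using assms
    by (simp add: vec_eq_iff forall_2 matrix_matrix_mult_def sum_2 mat_def ginvE_simps field_simps)
      (simp_all add: gdet_def algebra_simps)
  have 2: "B ** (\<chi> a b. g y a b) = mat 1"
    unfolding B_def using assms
    by (simp add: vec_eq_iff forall_2 matrix_matrix_mult_def sum_2 mat_def ginvE_simps field_simps)
      (simp_all add: gdet_def algebra_simps)
  show ?thesis unfolding ginv_def matrix_inv_eqI[OF 1 2] B_def by simp
qed

locale M2 =
  fixes U :: "pt set" and g :: "pt \<Rightarrow> idx \<Rightarrow> idx \<Rightarrow> real"
  assumes metric: "riem_metric U g"
begin

lemma opU: "open U" using metric unfolding riem_metric_def by blast
lemma gsym: "y \<in> U \<Longrightarrow> g y i j = g y j i" using metric unfolding riem_metric_def by blast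
lemma g_sm: "smooth_on U (\<lambda>y. g y i j)" using metric unfolding riem_metric_def by blast

lemma det_pos: assumes y: "y \<in> U" shows "gdet g y > 0"
proof -
  have pos: "\<And>v::real^2. v \<noteq> 0 \<Longrightarrow> (\<Sum>i\<in>UNIV. \<Sum>j\<in>UNIV. g y i j * v$i * v$j) > 0"
    using metric y unfolding riem_metric_def by blast
  have s: "g y 2 1 = g y 1 2" using gsym[OF y] .
  have "(\<Sum>i\<in>UNIV. \<Sum>j\<in>UNIV. g y i j * (axis 1 1 :: real^2)$i * (axis 1 1 :: real^2)$j) > 0"
    by (rule pos) (simp add: vec_eq_iff axis_def)
  hence g11: "g y 1 1 > 0" by (simp add: sum_2 axis_def)
  define v :: "real^2" where "v = (\<chi> i. if i = 1 then - g y 1 2 else g y 1 1)"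
  have v1: "v$1 = - g y 1 2" and v2: "v$2 = g y 1 1" unfolding v_def by auto
  have "v \<noteq> 0"
  proof
    assume "v = 0" hence "v$2 = 0" by simp
    with g11 v2 show False by simp
  qed
  hence "(\<Sum>i\<in>UNIV. \<Sum>j\<in>UNIV. g y i j * v$i * v$j) > 0" by (rule pos)
  hence "g y 1 1 * (g y 1 1 * g y 2 2 - g y 1 2 * g y 2 1) > 0"
    by (simp add: sum_2 v1 v2 s algebra_simps power2_eq_square)
  thus ?thesis using g11 unfolding gdet_def by (simp add: zero_less_mult_iff)
qed

lemma det_nz: "y \<in> U \<Longrightarrow> gdet g y \<noteq> 0" using det_pos by force

lemma ginv_eqU: "y \<in> U \<Longrightarrow> ginv g y i j = ginvE g y i j"
  by (rule ginv_eq[OF det_nz])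

lemma gdet_sm: "smooth_on U (gdet g)"
  unfolding gdet_def by (intro sm_diff[OF opU] sm_mult[OF opU] g_sm)

lemma sm_if: "smooth_on U f \<Longrightarrow> smooth_on U h \<Longrightarrow> smooth_on U (\<lambda>y. if P then f y else h y)"
  by (cases P) simp_all

lemma ginvE_sm: "smooth_on U (\<lambda>y. ginvE g y i j)"
proof -
  have "smooth_on U (\<lambda>y. (if i = 1 \<and> j = 1 then g y 2 2 else if i = 2 \<and> j = 2 then g y 1 1 else - g y i j) / gdet g y)"
  proof (rule sm_div[OF opU _ gdet_sm])
    show "smooth_on U (\<lambda>y. if i = 1 \<and> j = 1 then g y 2 2 else if i = 2 \<and> j = 2 then g y 1 1 else - g y i j)"
      by (intro sm_if g_sm sm_minus[OF opU])
    show "\<forall>y\<in>U. gdet g y \<noteq> 0" using det_nz by blast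
  qed
  thus ?thesis unfolding ginvE_def .
qed

lemma ginv_sm: "smooth_on U (\<lambda>y. ginv g y i j)"
  by (rule sm_cong[OF opU ginvE_sm]) (simp add: ginv_eqU)

lemma christ_sm: "smooth_on U (\<lambda>y. christ g y k i j)"
  unfolding christ_def
  by (intro sm_mult[OF opU] sm_const[OF opU] sm_sum2[OF opU] sm_add[OF opU] sm_diff[OF opU] ginv_sm sm_pd[OF opU] g_sm)

lemma riemann_sm: "smooth_on U (\<lambda>y. riemann g y r s m n)"
  unfolding riemann_def
  by (intro sm_add[OF opU] sm_diff[OF opU] sm_mult[OF opU] sm_sum2[OF opU] christ_sm sm_pd[OF opU])

lemma ricci_sm: "smooth_on U (\<lambda>y. ricci g y a b)"
  unfolding ricci_def by (intro sm_sum2[OF opU] riemann_sm)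

lemma scal_sm: "smooth_on U (scal g)"
proof -
  have "smooth_on U (\<lambda>y. \<Sum>a\<in>UNIV. \<Sum>b\<in>UNIV. ginv g y a b * ricci g y a b)"
    by (intro sm_sum2[OF opU] sm_mult[OF opU] ginv_sm ricci_sm)
  thus ?thesis unfolding scal_def[abs_def] .
qed

lemma pdg_sym: "y \<in> U \<Longrightarrow> pd k (\<lambda>y. g y i j) y = pd k (\<lambda>y. g y j i) y"
  by (rule pd_local[OF opU]) (auto simp: gsym)

lemma christ_sym: "y \<in> U \<Longrightarrow> christ g y k i j = christ g y k j i"
  unfolding christ_def by (simp add: pdg_sym[of y _ i j] algebra_simps)

end


lemma compat_alg:
  fixes G H :: "idx \<Rightarrow> idx \<Rightarrow> real" and D :: "idx \<Rightarrow> idx \<Rightarrow> idx \<Rightarrow> real" and d :: real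
  assumes Gs: "G 2 1 = G 1 2" and Ds: "\<And>a. D a 2 1 = D a 1 2"
    and d: "d = G 1 1 * G 2 2 - G 1 2 * G 2 1" "d \<noteq> 0"
    and H: "H 1 1 = G 2 2 / d" "H 2 2 = G 1 1 / d" "H 1 2 = - G 1 2 / d" "H 2 1 = - G 2 1 / d"
  shows "D k i j = (\<Sum>l\<in>UNIV. (1/2 * (\<Sum>m\<in>UNIV. H l m * (D k i m + D i k m - D m k i))) * G l j
                        + (1/2 * (\<Sum>m\<in>UNIV. H l m * (D k j m + D j k m - D m k j))) * G i l)"
  using exhaust_2[of k] exhaust_2[of i] exhaust_2[of j] d(2)
  apply (elim disjE) apply (simp_all add: sum_2 H Gs Ds field_simps)
  apply (simp_all add: d(1) Gs algebra_simps)
  done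


lemma riem_antisym_alg:
  fixes G :: "idx \<Rightarrow> idx \<Rightarrow> real" and C :: "idx \<Rightarrow> idx \<Rightarrow> idx \<Rightarrow> real"
    and DC :: "idx \<Rightarrow> idx \<Rightarrow> idx \<Rightarrow> idx \<Rightarrow> real"
  assumes Gs: "G 2 1 = G 1 2"
  defines "R \<equiv> \<lambda>e b c a. DC c e a b - DC a e c b + (\<Sum>l\<in>UNIV. C e c l * C l a b) - (\<Sum>l\<in>UNIV. C e a l * C l c b)"
    and "DG \<equiv> \<lambda>c i j. (\<Sum>l\<in>UNIV. C l c i * G l j + C l c j * G i l)"
  defines "E \<equiv> \<lambda>c a f b. (\<Sum>l\<in>UNIV. DC c l a f * G l b + C l a f * DG c l b + DC c l a b * G f l + C l a b * DG c f l)"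
  shows "E c a f b - E a c f b = (\<Sum>e\<in>UNIV. G f e * R e b c a) + (\<Sum>e\<in>UNIV. G b e * R e f c a)"
  using exhaust_2[of c] exhaust_2[of a] exhaust_2[of f] exhaust_2[of b]
  by (elim disjE) (simp_all add: R_def DG_def E_def sum_2 Gs algebra_simps)

lemma ric_alg:
  fixes G H A ric :: "idx \<Rightarrow> idx \<Rightarrow> real" and d :: real
  assumes Gs: "G 2 1 = G 1 2"
    and d: "d = G 1 1 * G 2 2 - G 1 2 * G 2 1" "d \<noteq> 0"
    and H: "H 1 1 = G 2 2 / d" "H 2 2 = G 1 1 / d" "H 1 2 = - G 1 2 / d" "H 2 1 = - G 2 1 / d"
    and anti: "\<And>f b. (\<Sum>e\<in>UNIV. G f e * A e b) + (\<Sum>e\<in>UNIV. G b e * A e f) = 0"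
    and ric: "\<And>b. ric b 1 = - A 2 b" "\<And>b. ric b 2 = A 1 b"
  shows "ric a b = (\<Sum>a\<in>UNIV. \<Sum>b\<in>UNIV. H a b * ric a b) / 2 * G a b"
proof -
  have a1: "G 1 1 * A 1 1 + G 1 2 * A 2 1 = 0" using anti[of 1 1] by (simp add: sum_2 algebra_simps)
  have a2: "G 1 2 * A 1 2 + G 2 2 * A 2 2 = 0" using anti[of 2 2] by (simp add: sum_2 Gs algebra_simps)
  have a3: "G 1 1 * A 1 2 + G 1 2 * A 2 2 + G 1 2 * A 1 1 + G 2 2 * A 2 1 = 0"
    using anti[of 1 2] by (simp add: sum_2 Gs algebra_simps)
  define w where "w = G 1 1 * A 1 2 + G 1 2 * A 2 2"
  have "A 1 1 * d - G 1 2 * w = G 2 2 * (G 1 1 * A 1 1 + G 1 2 * A 2 1)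
      - G 1 2 * (G 1 1 * A 1 2 + G 1 2 * A 2 2 + G 1 2 * A 1 1 + G 2 2 * A 2 1)"
    unfolding w_def d(1) Gs by (simp add: algebra_simps)
  note X = this[unfolded a1 a3]
  have "A 1 1 * d = G 1 2 * w" using X by simp
  hence e11: "A 1 1 = G 1 2 * w / d" using d(2) by (simp add: field_simps)
  have "A 2 1 * d + G 1 1 * w = - G 1 2 * (G 1 1 * A 1 1 + G 1 2 * A 2 1)
      + G 1 1 * (G 1 1 * A 1 2 + G 1 2 * A 2 2 + G 1 2 * A 1 1 + G 2 2 * A 2 1)"
    unfolding w_def d(1) Gs by (simp add: algebra_simps)
  note X = this[unfolded a1 a3]
  have "A 2 1 * d = - G 1 1 * w" using X by simp
  hence e21: "A 2 1 = - G 1 1 * w / d" using d(2) by (simp add: field_simps)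
  have "A 1 2 * d - G 2 2 * w = - G 1 2 * (G 1 2 * A 1 2 + G 2 2 * A 2 2)"
    unfolding w_def d(1) Gs by (simp add: algebra_simps)
  note X = this[unfolded a2]
  have "A 1 2 * d = G 2 2 * w" using X by simp
  hence e12: "A 1 2 = G 2 2 * w / d" using d(2) by (simp add: field_simps)
  have "A 2 2 * d + G 1 2 * w = G 1 1 * (G 1 2 * A 1 2 + G 2 2 * A 2 2)"
    unfolding w_def d(1) Gs by (simp add: algebra_simps)
  note X = this[unfolded a2]
  have "A 2 2 * d = - G 1 2 * w" using X by simp
  hence e22: "A 2 2 = - G 1 2 * w / d" using d(2) by (simp add: field_simps)
  show ?thesis
    using exhaust_2[of a] exhaust_2[of b] d(2)
    apply (elim disjE) apply (simp_all add: sum_2 H Gs ric e11 e12 e21 e22 field_simps)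
    apply (simp_all add: d(1) Gs algebra_simps)
    done
qed

lemma ricci_id_alg:
  fixes W :: "idx \<Rightarrow> real" and DW :: "idx \<Rightarrow> idx \<Rightarrow> real" and DDW C :: "idx \<Rightarrow> idx \<Rightarrow> idx \<Rightarrow> real"
    and DC :: "idx \<Rightarrow> idx \<Rightarrow> idx \<Rightarrow> idx \<Rightarrow> real"
  assumes Cs: "\<And>k. C k 2 1 = C k 1 2" and DDs: "\<And>b. DDW 2 1 b = DDW 1 2 b"
  defines "CW \<equiv> \<lambda>a b. DW a b - (\<Sum>d\<in>UNIV. C d a b * W d)"
  defines "P \<equiv> \<lambda>c a b. DDW c a b - (\<Sum>d\<in>UNIV. DC c d a b * W d + C d a b * DW c d)"
  defines "Q \<equiv> \<lambda>c a b. P c a b - (\<Sum>d\<in>UNIV. C d c a * CW d b) - (\<Sum>d\<in>UNIV. C d c b * CW a d)"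
  defines "R \<equiv> \<lambda>e b c a. DC c e a b - DC a e c b + (\<Sum>l\<in>UNIV. C e c l * C l a b) - (\<Sum>l\<in>UNIV. C e a l * C l c b)"
  shows "Q c a b - Q a c b = - (\<Sum>e\<in>UNIV. R e b c a * W e)"
  using exhaust_2[of c] exhaust_2[of a] exhaust_2[of b]
  by (elim disjE) (simp_all add: Q_def P_def CW_def R_def sum_2 Cs DDs algebra_simps)


definition cov2 :: "(pt \<Rightarrow> idx \<Rightarrow> idx \<Rightarrow> real) \<Rightarrow> (pt \<Rightarrow> idx \<Rightarrow> idx \<Rightarrow> real) \<Rightarrow> pt \<Rightarrow> idx \<Rightarrow> idx \<Rightarrow> idx \<Rightarrow> real" where
  "cov2 g H x c a b = pd c (\<lambda>y. H y a b) x - (\<Sum>d\<in>UNIV. christ g x d c a * H x d b) - (\<Sum>d\<in>UNIV. christ g x d c b * H x a d)"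

context M2 begin

lemma sm_addI[simp]: "smooth_on U f \<Longrightarrow> smooth_on U h \<Longrightarrow> smooth_on U (\<lambda>y. f y + h y)" by (rule sm_add[OF opU])
lemma sm_diffI[simp]: "smooth_on U f \<Longrightarrow> smooth_on U h \<Longrightarrow> smooth_on U (\<lambda>y. f y - h y)" by (rule sm_diff[OF opU])
lemma sm_multI[simp]: "smooth_on U f \<Longrightarrow> smooth_on U h \<Longrightarrow> smooth_on U (\<lambda>y. f y * h y)" by (rule sm_mult[OF opU])
lemma sm_minusI[simp]: "smooth_on U f \<Longrightarrow> smooth_on U (\<lambda>y. - f y)" by (rule sm_minus[OF opU])
lemma sm_constI[simp]: "smooth_on U (\<lambda>y. c)" by (rule sm_const[OF opU])
lemma sm_pdI[simp]: "smooth_on U f \<Longrightarrow> smooth_on U (pd i f)" by (rule sm_pd[OF opU])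
lemma sm_sumI[simp]: "(\<And>a. smooth_on U (f a)) \<Longrightarrow> smooth_on U (\<lambda>y. \<Sum>a\<in>(UNIV::idx set). f a y)" by (rule sm_sum2[OF opU])
declare g_sm[simp] christ_sm[simp] ginv_sm[simp] riemann_sm[simp] ricci_sm[simp] scal_sm[simp]

lemma pdS_add: "smooth_on U f \<Longrightarrow> smooth_on U h \<Longrightarrow> x \<in> U \<Longrightarrow> pd i (\<lambda>y. f y + h y) x = pd i f x + pd i h x"
  by (rule pd_add; rule sm_at[OF opU])
lemma pdS_diff: "smooth_on U f \<Longrightarrow> smooth_on U h \<Longrightarrow> x \<in> U \<Longrightarrow> pd i (\<lambda>y. f y - h y) x = pd i f x - pd i h x"
  by (rule pd_diff; rule sm_at[OF opU])
lemma pdS_mult: "smooth_on U f \<Longrightarrow> smooth_on U h \<Longrightarrow> x \<in> U \<Longrightarrow> pd i (\<lambda>y. f y * h y) x = pd i f x * h x + f x * pd i h x"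
  by (rule pd_mult; rule sm_at[OF opU])
lemma pdS_minus: "smooth_on U f \<Longrightarrow> x \<in> U \<Longrightarrow> pd i (\<lambda>y. - f y) x = - pd i f x"
  by (rule pd_minus; rule sm_at[OF opU])
lemma pdS_sum: "(\<And>a. smooth_on U (f a)) \<Longrightarrow> x \<in> U \<Longrightarrow> pd i (\<lambda>y. \<Sum>a\<in>(UNIV::idx set). f a y) x = (\<Sum>a\<in>UNIV. pd i (f a) x)"
  by (rule pd_sum) (auto intro: sm_at[OF opU])
lemmas pdS = pdS_add pdS_diff pdS_mult pdS_minus pdS_sum pd_const

lemma compat:
  assumes y: "y \<in> U"
  shows "pd k (\<lambda>y. g y i j) y = (\<Sum>l\<in>UNIV. christ g y l k i * g y l j + christ g y l k j * g y i l)"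
proof -
  have dn: "g y 1 1 * g y 2 2 - g y 1 2 * g y 1 2 \<noteq> 0"
    using det_nz[OF y] gsym[OF y, of 2 1] unfolding gdet_def by simp
  show ?thesis
  unfolding christ_def
  by (rule compat_alg[where G = "g y" and H = "ginv g y" and D = "\<lambda>a b c. pd a (\<lambda>y. g y b c) y" and d = "gdet g y"])
     (use dn in \<open>auto simp: gsym[OF y] pdg_sym[OF y] gdet_def ginv_eqU[OF y] ginvE_simps\<close>)
qed

lemma pd_pd_g:
  assumes x: "x \<in> U"
  shows "pd c (pd a (\<lambda>y. g y f b)) x =
     (\<Sum>l\<in>UNIV. pd c (\<lambda>y. christ g y l a f) x * g x l b + christ g x l a f * (\<Sum>m\<in>UNIV. christ g x m c l * g x m b + christ g x m c b * g x l m)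
       + pd c (\<lambda>y. christ g y l a b) x * g x f l + christ g x l a b * (\<Sum>m\<in>UNIV. christ g x m c f * g x m l + christ g x m c l * g x f m))"
proof -
  have "pd c (pd a (\<lambda>y. g y f b)) x = pd c (\<lambda>y. \<Sum>l\<in>UNIV. christ g y l a f * g y l b + christ g y l a b * g y f l) x"
    by (rule pd_local[OF opU x]) (rule compat)
  also have "\<dots> = (\<Sum>l\<in>UNIV. pd c (\<lambda>y. christ g y l a f) x * g x l b + christ g x l a f * pd c (\<lambda>y. g y l b) x
       + pd c (\<lambda>y. christ g y l a b) x * g x f l + christ g x l a b * pd c (\<lambda>y. g y f l) x)"
    using x by (simp add: pdS add.assoc)
  also have "\<dots> = (\<Sum>l\<in>UNIV. pd c (\<lambda>y. christ g y l a f) x * g x l b + christ g x l a f * (\<Sum>m\<in>UNIV. christ g x m c l * g x m b + christ g x m c b * g x l m)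
       + pd c (\<lambda>y. christ g y l a b) x * g x f l + christ g x l a b * (\<Sum>m\<in>UNIV. christ g x m c f * g x m l + christ g x m c l * g x f m))"
    by (simp only: compat[OF x])
  finally show ?thesis .
qed

lemma riem_antisym:
  assumes x: "x \<in> U"
  shows "(\<Sum>e\<in>UNIV. g x f e * riemann g x e b c a) + (\<Sum>e\<in>UNIV. g x b e * riemann g x e f c a) = 0"
proof -
  have sw: "pd c (pd a (\<lambda>y. g y f b)) x = pd a (pd c (\<lambda>y. g y f b)) x"
    by (rule schwarz[OF opU g_sm x])
  have "(\<Sum>e\<in>UNIV. g x f e * riemann g x e b c a) + (\<Sum>e\<in>UNIV. g x b e * riemann g x e f c a)
     = pd c (pd a (\<lambda>y. g y f b)) x - pd a (pd c (\<lambda>y. g y f b)) x"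
    unfolding pd_pd_g[OF x] riemann_def
    by (rule riem_antisym_alg[where G = "g x" and C = "christ g x" and DC = "\<lambda>c l a f. pd c (\<lambda>y. christ g y l a f) x", symmetric])
       (rule gsym[OF x])
  thus ?thesis using sw by simp
qed

lemma riemann_same: "riemann g x r s m m = 0"
  unfolding riemann_def by simp
lemma riemann_swap: "riemann g x r s n m = - riemann g x r s m n"
  unfolding riemann_def by simp

lemma ric_rho:
  assumes x: "x \<in> U"
  shows "ricci g x a b = scal g x / 2 * g x a b"
  unfolding scal_def
proof (rule ric_alg[where G = "g x" and H = "ginv g x" and A = "\<lambda>e b. riemann g x e b 1 2" and d = "gdet g x"])
  show "g x 2 1 = g x 1 2" by (rule gsym[OF x])
  show "gdet g x = g x 1 1 * g x 2 2 - g x 1 2 * g x 2 1" by (simp add: gdet_def)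
  show "gdet g x \<noteq> 0" by (rule det_nz[OF x])
  show "ginv g x 1 1 = g x 2 2 / gdet g x" "ginv g x 2 2 = g x 1 1 / gdet g x"
    "ginv g x 1 2 = - g x 1 2 / gdet g x" "ginv g x 2 1 = - g x 2 1 / gdet g x"
    by (simp_all add: ginv_eqU[OF x] ginvE_simps)
  show "\<And>f b. (\<Sum>e\<in>UNIV. g x f e * riemann g x e b 1 2) + (\<Sum>e\<in>UNIV. g x b e * riemann g x e f 1 2) = 0"
    by (rule riem_antisym[OF x])
  show "\<And>b. ricci g x b 1 = - riemann g x 2 b 1 2" "\<And>b. ricci g x b 2 = riemann g x 1 b 1 2"
    unfolding ricci_def by (simp_all add: sum_2 riemann_same, subst riemann_swap, simp)
qed

lemma ricci_identity:
  assumes x: "x \<in> U" and W: "\<And>e. smooth_on U (\<lambda>y. W y e)"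
  shows "cov2 g (cov1 g W) x c a b - cov2 g (cov1 g W) x a c b = - (\<Sum>e\<in>UNIV. riemann g x e b c a * W x e)"
proof -
  have pc: "pd c (\<lambda>y. cov1 g W y a b) x = pd c (pd a (\<lambda>y. W y b)) x
       - (\<Sum>d\<in>UNIV. pd c (\<lambda>y. christ g y d a b) x * W x d + christ g x d a b * pd c (\<lambda>y. W y d) x)" for c a b
    unfolding cov1_def using x W by (simp add: pdS)
  show ?thesis
    unfolding cov2_def pc unfolding cov1_def riemann_def
    by (rule ricci_id_alg[where C = "christ g x" and DC = "\<lambda>c l a f. pd c (\<lambda>y. christ g y l a f) x"
          and W = "W x" and DW = "\<lambda>c d. pd c (\<lambda>y. W y d) x" and DDW = "\<lambda>c a b. pd c (pd a (\<lambda>y. W y b)) x"])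
       (auto intro: christ_sym[OF x] schwarz[OF opU W x])
qed

end


lemma first_alg:
  fixes G H Rg CX :: "idx \<Rightarrow> idx \<Rightarrow> real" and Gv Xv DS :: "idx \<Rightarrow> real"
    and Rm :: "idx \<Rightarrow> idx \<Rightarrow> idx \<Rightarrow> idx \<Rightarrow> real" and d Gam S lam :: real
  assumes Gs: "G 2 1 = G 1 2"
    and dd: "d = G 1 1 * G 2 2 - G 1 2 * G 2 1" "d \<noteq> 0"
    and H: "H 1 1 = G 2 2 / d" "H 2 2 = G 1 1 / d" "H 1 2 = - G 1 2 / d" "H 2 1 = - G 2 1 / d"
    and CX: "\<And>a b. CX a b + CX b a = Xv a * Xv b + 2 * (lam - S/2) * G a b"
    and R0: "\<And>e b c. Rm e b c c = 0" and R21: "\<And>e b. Rm e b 2 1 = - Rm e b 1 2"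
    and R1: "\<And>b. Rm 1 b 1 2 = S/2 * G b 2" and R2: "\<And>b. Rm 2 b 1 2 = - (S/2 * G b 1)"
  defines "HG \<equiv> \<lambda>a b. - (1/2) * (Gv a * Xv b + Gv b * Xv a) - (1/2) * Gam * Xv a * Xv b - Gam * (lam - S/2) * G a b"
  fixes P :: "idx \<Rightarrow> idx \<Rightarrow> idx \<Rightarrow> real"
  assumes Pdef: "\<And>c a b. P c a b = - (1/2) * (HG c a * Xv b + Gv a * CX c b + HG c b * Xv a + Gv b * CX c a)
      - (1/2) * (Gv c * Xv a * Xv b + Gam * CX c a * Xv b + Gam * Xv a * CX c b)
      - (Gv c * (lam - S/2) + Gam * (- (1/2) * DS c)) * G a b"
  assumes hyp: "(\<Sum>c\<in>UNIV. \<Sum>b\<in>UNIV. H c b * (P c a b - P a c b))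
      = - (\<Sum>c\<in>UNIV. \<Sum>b\<in>UNIV. H c b * (\<Sum>e\<in>UNIV. Rm e b c a * Gv e))"
  shows "(S - 2 * lam / 3) * Gv a + (2 * Gam / 3) * DS a
      = 2 * (\<Sum>b\<in>UNIV. (\<Sum>c\<in>UNIV. H b c * (Gam * Xv c + Gv c)) * ((1/2) * (CX a b - CX b a)))"
proof -
  have c11: "CX 1 1 = (Xv 1 * Xv 1 + 2 * (lam - S/2) * G 1 1) / 2" using CX[of 1 1] by simp
  have c22: "CX 2 2 = (Xv 2 * Xv 2 + 2 * (lam - S/2) * G 2 2) / 2" using CX[of 2 2] by simp
  have c21: "CX 2 1 = Xv 1 * Xv 2 + 2 * (lam - S/2) * G 1 2 - CX 1 2" using CX[of 1 2] Gs by (simp add: algebra_simps)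
  define A :: "idx \<Rightarrow> idx \<Rightarrow> real" where "A i j = H i j * d" for i j
  have A: "A 1 1 = G 2 2" "A 2 2 = G 1 1" "A 1 2 = - G 1 2" "A 2 1 = - G 1 2"
    unfolding A_def using dd(2) by (simp_all add: H Gs)
  have Hd: "H i j = A i j / d" for i j unfolding A_def using dd(2) by simp
  define L where "L = (S - 2 * lam / 3) * Gv a + (2 * Gam / 3) * DS a
      - 2 * (\<Sum>b\<in>UNIV. (\<Sum>c\<in>UNIV. H b c * (Gam * Xv c + Gv c)) * ((1/2) * (CX a b - CX b a)))"
  define M where "M = (\<Sum>c\<in>UNIV. \<Sum>b\<in>UNIV. H c b * (P c a b - P a c b))
      + (\<Sum>c\<in>UNIV. \<Sum>b\<in>UNIV. H c b * (\<Sum>e\<in>UNIV. Rm e b c a * Gv e))"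
  have L': "d * L = (S - 2 * lam / 3) * Gv a * d + (2 * Gam / 3) * DS a * d
      - 2 * (\<Sum>b\<in>UNIV. (\<Sum>c\<in>UNIV. A b c * (Gam * Xv c + Gv c)) * ((1/2) * (CX a b - CX b a)))"
    unfolding L_def Hd using dd(2) by (simp add: sum_distrib_left sum_divide_distrib algebra_simps)
  have M': "d * M = (\<Sum>c\<in>UNIV. \<Sum>b\<in>UNIV. A c b * (P c a b - P a c b))
      + (\<Sum>c\<in>UNIV. \<Sum>b\<in>UNIV. A c b * (\<Sum>e\<in>UNIV. Rm e b c a * Gv e))"
    unfolding M_def Hd using dd(2) by (simp add: sum_distrib_left sum_divide_distrib algebra_simps)
  have "d * L = - (4/3) * (d * M)"
    unfolding L' M' Pdef HG_def
    using exhaust_2[of a]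
    by (elim disjE) (simp_all add: sum_2 A Gs c11 c22 c21 R0 R21 R1 R2 dd(1) field_simps)
  moreover have "M = 0" unfolding M_def using hyp by simp
  ultimately have "d * L = 0" by simp
  hence "L = 0" using dd(2) by simp
  thus ?thesis unfolding L_def by simp
qed


lemma tr_alg:
  fixes G H :: "idx \<Rightarrow> idx \<Rightarrow> real" and D :: "idx \<Rightarrow> idx \<Rightarrow> idx \<Rightarrow> real" and d :: real
  assumes Gs: "G 2 1 = G 1 2" and Ds: "\<And>a. D a 2 1 = D a 1 2"
    and d: "d = G 1 1 * G 2 2 - G 1 2 * G 2 1" "d \<noteq> 0"
    and H: "H 1 1 = G 2 2 / d" "H 2 2 = G 1 1 / d" "H 1 2 = - G 1 2 / d" "H 2 1 = - G 2 1 / d"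
  shows "(\<Sum>e\<in>UNIV. (1/2 * (\<Sum>m\<in>UNIV. H e m * (D c e m + D e c m - D m c e))))
     = (D c 1 1 * G 2 2 + G 1 1 * D c 2 2 - D c 1 2 * G 2 1 - G 1 2 * D c 2 1) / (2 * d)"
  using exhaust_2[of c] d(2)
  by (elim disjE) (simp_all add: sum_2 H Gs Ds field_simps)

lemma div_alg:
  fixes G H :: "idx \<Rightarrow> idx \<Rightarrow> real" and D :: "idx \<Rightarrow> idx \<Rightarrow> idx \<Rightarrow> real" and d :: real
    and K :: "idx \<Rightarrow> real" and DK :: "idx \<Rightarrow> idx \<Rightarrow> real"
  assumes Gs: "G 2 1 = G 1 2" and Ds: "\<And>a. D a 2 1 = D a 1 2"
    and d: "d = G 1 1 * G 2 2 - G 1 2 * G 2 1" "d \<noteq> 0"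
    and H: "H 1 1 = G 2 2 / d" "H 2 2 = G 1 1 / d" "H 1 2 = - G 1 2 / d" "H 2 1 = - G 2 1 / d"
  defines "C \<equiv> \<lambda>k i j. (1/2 * (\<Sum>m\<in>UNIV. H k m * (D i j m + D j i m - D m i j)))"
  defines "tr \<equiv> \<lambda>c. (\<Sum>e\<in>UNIV. C e c e)"
  defines "V \<equiv> \<lambda>c. G c 2 * K 1 - G c 1 * K 2"
  shows "(D 1 2 2 * K 1 + G 2 2 * DK 1 1 - (D 1 2 1 * K 2 + G 2 1 * DK 1 2))
       - (D 2 1 2 * K 1 + G 1 2 * DK 2 1 - (D 2 1 1 * K 2 + G 1 1 * DK 2 2))
       - tr 1 * V 2 + tr 2 * V 1
     = d * (\<Sum>a\<in>UNIV. \<Sum>b\<in>UNIV. H a b * (DK a b - (\<Sum>e\<in>UNIV. C e a b * K e)))"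
proof -
  define A :: "idx \<Rightarrow> idx \<Rightarrow> real" where "A i j = H i j * d" for i j
  have A: "A 1 1 = G 2 2" "A 2 2 = G 1 1" "A 1 2 = - G 1 2" "A 2 1 = - G 1 2"
    unfolding A_def using d(2) by (simp_all add: H Gs)
  have Hd: "H i j = A i j / d" for i j unfolding A_def using d(2) by simp
  define Cd where "Cd k i j = (1/2 * (\<Sum>m\<in>UNIV. A k m * (D i j m + D j i m - D m i j)))" for k i j
  have Cd: "C k i j = Cd k i j / d" for k i j
    unfolding C_def Cd_def Hd using d(2) by (simp add: sum_2 field_simps)
  define Z where "Z = (D 1 2 2 * K 1 + G 2 2 * DK 1 1 - (D 1 2 1 * K 2 + G 2 1 * DK 1 2))
       - (D 2 1 2 * K 1 + G 1 2 * DK 2 1 - (D 2 1 1 * K 2 + G 1 1 * DK 2 2))"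
  have poly: "d * Z - (\<Sum>e\<in>UNIV. Cd e 1 e) * V 2 + (\<Sum>e\<in>UNIV. Cd e 2 e) * V 1
      = d * (\<Sum>a\<in>UNIV. \<Sum>b\<in>UNIV. A a b * DK a b) - (\<Sum>a\<in>UNIV. \<Sum>b\<in>UNIV. A a b * (\<Sum>e\<in>UNIV. Cd e a b * K e))"
    unfolding Z_def Cd_def V_def by (simp add: sum_2 A Gs Ds d(1) field_simps)
  have l: "d * (Z - tr 1 * V 2 + tr 2 * V 1) = d * Z - (\<Sum>e\<in>UNIV. Cd e 1 e) * V 2 + (\<Sum>e\<in>UNIV. Cd e 2 e) * V 1"
    unfolding tr_def Cd using d(2) by (simp add: sum_divide_distrib[symmetric] algebra_simps)
  have r: "d * (d * (\<Sum>a\<in>UNIV. \<Sum>b\<in>UNIV. H a b * (DK a b - (\<Sum>e\<in>UNIV. C e a b * K e))))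
      = d * (\<Sum>a\<in>UNIV. \<Sum>b\<in>UNIV. A a b * DK a b) - (\<Sum>a\<in>UNIV. \<Sum>b\<in>UNIV. A a b * (\<Sum>e\<in>UNIV. Cd e a b * K e))"
  proof -
    have t: "d * (d * (H a b * (DK a b - (\<Sum>e\<in>UNIV. C e a b * K e))))
        = d * (A a b * DK a b) - A a b * (\<Sum>e\<in>UNIV. Cd e a b * K e)" for a b
      unfolding Hd Cd using d(2) by (simp add: sum_2 field_simps)
    have "d * (d * (\<Sum>a\<in>UNIV. \<Sum>b\<in>UNIV. H a b * (DK a b - (\<Sum>e\<in>UNIV. C e a b * K e))))
        = (\<Sum>a\<in>UNIV. \<Sum>b\<in>UNIV. d * (d * (H a b * (DK a b - (\<Sum>e\<in>UNIV. C e a b * K e)))))"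
      by (simp add: sum_distrib_left)
    also have "\<dots> = (\<Sum>a\<in>UNIV. \<Sum>b\<in>UNIV. d * (A a b * DK a b) - A a b * (\<Sum>e\<in>UNIV. Cd e a b * K e))"
      by (simp only: t)
    also have "\<dots> = d * (\<Sum>a\<in>UNIV. \<Sum>b\<in>UNIV. A a b * DK a b) - (\<Sum>a\<in>UNIV. \<Sum>b\<in>UNIV. A a b * (\<Sum>e\<in>UNIV. Cd e a b * K e))"
      by (simp add: sum_subtractf sum_distrib_left)
    finally show ?thesis .
  qed
  have "d * (Z - tr 1 * V 2 + tr 2 * V 1) = d * (d * (\<Sum>a\<in>UNIV. \<Sum>b\<in>UNIV. H a b * (DK a b - (\<Sum>e\<in>UNIV. C e a b * K e))))"
    unfolding r l poly ..
  hence "Z - tr 1 * V 2 + tr 2 * V 1 = d * (\<Sum>a\<in>UNIV. \<Sum>b\<in>UNIV. H a b * (DK a b - (\<Sum>e\<in>UNIV. C e a b * K e)))"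
    using d(2) by simp
  thus ?thesis unfolding Z_def .
qed


locale Main2 = M2 +
  fixes X :: "pt \<Rightarrow> idx \<Rightarrow> real" and Gam :: "pt \<Rightarrow> real" and lam :: real
  assumes X_sm: "\<And>a. smooth_on U (\<lambda>x. X x a)"
    and einstein: "\<forall>x\<in>U. \<forall>a b. ricci g x a b
        = (1/2) * X x a * X x b - (1/2) * (cov1 g X x a b + cov1 g X x b a) + lam * g x a b"
    and Gam_sm: "smooth_on U Gam"
    and Kill: "killing U g (\<lambda>x a. Gam x * X x a + pd a Gam x)"
begin

declare X_sm[simp] Gam_sm[simp]

lemma pdS_cmult: "smooth_on U f \<Longrightarrow> x \<in> U \<Longrightarrow> pd i (\<lambda>y. c * f y) x = c * pd i f x"
  by (rule pd_cmult) (rule sm_at[OF opU])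

lemma cov1K:
  assumes y: "y \<in> U"
  shows "cov1 g (\<lambda>x a. Gam x * X x a + pd a Gam x) y a b
     = pd a Gam y * X y b + Gam y * cov1 g X y a b + cov1 g (\<lambda>y b. pd b Gam y) y a b"
  unfolding cov1_def using y by (simp add: pdS sum_2 algebra_simps)

lemma HGsym:
  assumes y: "y \<in> U"
  shows "cov1 g (\<lambda>y b. pd b Gam y) y a b = cov1 g (\<lambda>y b. pd b Gam y) y b a"
  unfolding cov1_def using schwarz[OF opU Gam_sm y, of a b] christ_sym[OF y] by simp

lemma ein_sym:
  assumes y: "y \<in> U"
  shows "cov1 g X y a b + cov1 g X y b a = X y a * X y b + 2 * (lam - scal g y / 2) * g y a b"
proof -
  have e: "ricci g y a b = (1/2) * X y a * X y b - (1/2) * (cov1 g X y a b + cov1 g X y b a) + lam * g y a b"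
    using einstein y by blast
  have r: "ricci g y a b = scal g y / 2 * g y a b" by (rule ric_rho[OF y])
  show ?thesis using e r by algebra
qed

lemma E1:
  assumes y: "y \<in> U"
  shows "cov1 g (\<lambda>y b. pd b Gam y) y a b = - (1/2) * (pd a Gam y * X y b + pd b Gam y * X y a)
      - (1/2) * Gam y * X y a * X y b - Gam y * (lam - scal g y / 2) * g y a b"
proof -
  have k: "cov1 g (\<lambda>x a. Gam x * X x a + pd a Gam x) y a b + cov1 g (\<lambda>x a. Gam x * X x a + pd a Gam x) y b a = 0"
    using Kill y unfolding killing_def by blast
  have s: "g y b a = g y a b" by (rule gsym[OF y])
  have k2: "pd a Gam y * X y b + Gam y * cov1 g X y a b + cov1 g (\<lambda>y b. pd b Gam y) y a b
      + (pd b Gam y * X y a + Gam y * cov1 g X y b a + cov1 g (\<lambda>y b. pd b Gam y) y a b) = 0"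
    using k unfolding cov1K[OF y] HGsym[OF y, of b a] .
  have e: "cov1 g X y a b + cov1 g X y b a = X y a * X y b + 2 * (lam - scal g y / 2) * g y a b"
    by (rule ein_sym[OF y])
  show ?thesis using k2 e by algebra
qed

lemma E1x: "y \<in> U \<Longrightarrow> cov1 g (\<lambda>y b. pd b Gam y) y a b = - (1/2) * (pd a Gam y * X y b + pd b Gam y * X y a)
      - (1/2) * Gam y * X y a * X y b - Gam y * (lam - scal g y / 2) * g y a b"
  by (rule E1)

lemma cov2T:
  assumes x: "x \<in> U"
  shows "cov2 g (cov1 g (\<lambda>y b. pd b Gam y)) x c a b =
     - (1/2) * (cov1 g (\<lambda>y b. pd b Gam y) x c a * X x b + pd a Gam x * cov1 g X x c b
                + cov1 g (\<lambda>y b. pd b Gam y) x c b * X x a + pd b Gam x * cov1 g X x c a)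
     - (1/2) * (pd c Gam x * X x a * X x b + Gam x * cov1 g X x c a * X x b + Gam x * X x a * cov1 g X x c b)
     - (pd c Gam x * (lam - scal g x / 2) + Gam x * (- (1/2) * pd c (scal g) x)) * g x a b"
proof -
  have p: "pd c (\<lambda>y. cov1 g (\<lambda>y b. pd b Gam y) y a b) x = pd c (\<lambda>y. - (1/2) * (pd a Gam y * X y b + pd b Gam y * X y a)
      - (1/2) * Gam y * X y a * X y b - Gam y * (lam - (1/2) * scal g y) * g y a b) x"
    by (rule pd_local[OF opU x]) (simp add: E1)
  have pG: "pd c (\<lambda>y. pd a Gam y) x = cov1 g (\<lambda>y b. pd b Gam y) x c a + (\<Sum>d\<in>UNIV. christ g x d c a * pd d Gam x)" for a
    unfolding cov1_def by simp
  have pX: "pd c (\<lambda>y. X y a) x = cov1 g X x c a + (\<Sum>d\<in>UNIV. christ g x d c a * X x d)" for a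
    unfolding cov1_def by simp
  have smG: "smooth_on U (\<lambda>y. pd a Gam y)" for a by simp
  show ?thesis
    unfolding cov2_def p
    apply (simp only: pdS pd_const x sm_addI sm_diffI sm_multI sm_minusI sm_constI smG X_sm Gam_sm g_sm scal_sm)
    using x apply (simp add: pG pX compat E1x sum_2 algebra_simps)
    done
qed


lemma Gd_sm[simp]: "smooth_on U (\<lambda>y. pd b Gam y)" by simp

lemma first_id:
  assumes x: "x \<in> U"
  shows "(scal g x - 2 * lam / 3) * pd d Gam x + (2 * Gam x / 3) * pd d (scal g) x
           = 2 * (\<Sum>b\<in>UNIV. raise g (\<lambda>y a. Gam y * X y a + pd a Gam y) x b
                    * ((1/2) * (cov1 g X x d b - cov1 g X x b d)))"
  unfolding raise_def
proof (rule first_alg[where G = "g x" and H = "ginv g x" and d = "gdet g x" and CX = "cov1 g X x"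
      and Gv = "\<lambda>b. pd b Gam x" and Xv = "X x" and DS = "\<lambda>c. pd c (scal g) x" and Rm = "riemann g x"
      and Gam = "Gam x" and S = "scal g x" and lam = lam and P = "cov2 g (cov1 g (\<lambda>y b. pd b Gam y)) x"])
  show "g x 2 1 = g x 1 2" by (rule gsym[OF x])
  show "gdet g x = g x 1 1 * g x 2 2 - g x 1 2 * g x 2 1" by (simp add: gdet_def)
  show "gdet g x \<noteq> 0" by (rule det_nz[OF x])
  show "ginv g x 1 1 = g x 2 2 / gdet g x" "ginv g x 2 2 = g x 1 1 / gdet g x"
    "ginv g x 1 2 = - g x 1 2 / gdet g x" "ginv g x 2 1 = - g x 2 1 / gdet g x"
    by (simp_all add: ginv_eqU[OF x] ginvE_simps)
  show "\<And>a b. cov1 g X x a b + cov1 g X x b a = X x a * X x b + 2 * (lam - scal g x / 2) * g x a b"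
    by (rule ein_sym[OF x])
  show "\<And>e b c. riemann g x e b c c = 0" by (rule riemann_same)
  show "\<And>e b. riemann g x e b 2 1 = - riemann g x e b 1 2" by (rule riemann_swap)
  show "\<And>b. riemann g x 1 b 1 2 = scal g x / 2 * g x b 2"
  proof -
    fix b
    have "ricci g x b 2 = riemann g x 1 b 1 2"
      unfolding ricci_def by (simp add: sum_2 riemann_same)
    thus "riemann g x 1 b 1 2 = scal g x / 2 * g x b 2" using ric_rho[OF x, of b 2] by simp
  qed
  show "\<And>b. riemann g x 2 b 1 2 = - (scal g x / 2 * g x b 1)"
  proof -
    fix b
    have "ricci g x b 1 = - riemann g x 2 b 1 2"
      unfolding ricci_def by (simp add: sum_2 riemann_same, subst riemann_swap, simp)
    thus "riemann g x 2 b 1 2 = - (scal g x / 2 * g x b 1)" using ric_rho[OF x, of b 1] by simp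
  qed
  show "\<And>c a b. cov2 g (cov1 g (\<lambda>y b. pd b Gam y)) x c a b =
      - (1/2) * ((- (1/2) * (pd c Gam x * X x a + pd a Gam x * X x c) - (1/2) * Gam x * X x c * X x a - Gam x * (lam - scal g x / 2) * g x c a) * X x b
         + pd a Gam x * cov1 g X x c b
         + (- (1/2) * (pd c Gam x * X x b + pd b Gam x * X x c) - (1/2) * Gam x * X x c * X x b - Gam x * (lam - scal g x / 2) * g x c b) * X x a
         + pd b Gam x * cov1 g X x c a)
      - (1/2) * (pd c Gam x * X x a * X x b + Gam x * cov1 g X x c a * X x b + Gam x * X x a * cov1 g X x c b)
      - (pd c Gam x * (lam - scal g x / 2) + Gam x * (- (1/2) * pd c (scal g) x)) * g x a b"
    unfolding cov2T[OF x] E1x[OF x] ..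
  show "(\<Sum>c\<in>UNIV. \<Sum>b\<in>UNIV. ginv g x c b * (cov2 g (cov1 g (\<lambda>y b. pd b Gam y)) x c d b - cov2 g (cov1 g (\<lambda>y b. pd b Gam y)) x d c b))
      = - (\<Sum>c\<in>UNIV. \<Sum>b\<in>UNIV. ginv g x c b * (\<Sum>e\<in>UNIV. riemann g x e b c d * pd e Gam x))"
    by (simp add: ricci_identity[OF x Gd_sm] sum_negf)
qed


abbreviation Kf where "Kf \<equiv> (\<lambda>y a. Gam y * X y a + pd a Gam y)"

lemma Kf_sm[simp]: "smooth_on U (\<lambda>y. Gam y * X y a + pd a Gam y)" by simp

lemma cov1_sm: "(\<And>e. smooth_on U (\<lambda>y. W y e)) \<Longrightarrow> smooth_on U (\<lambda>y. cov1 g W y a b)"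
  unfolding cov1_def by simp

lemma Phi_sm[simp]: "smooth_on U (\<lambda>y. cov1 g Kf y a b)"
  by (rule cov1_sm) simp

lemma Phi_anti: "y \<in> U \<Longrightarrow> cov1 g Kf y a b = - cov1 g Kf y b a"
  using Kill unfolding killing_def by (simp add: eq_neg_iff_add_eq_0)

lemma Phi11: "y \<in> U \<Longrightarrow> cov1 g Kf y 1 1 = 0" using Phi_anti[of y 1 1] by simp
lemma Phi22: "y \<in> U \<Longrightarrow> cov1 g Kf y 2 2 = 0" using Phi_anti[of y 2 2] by simp
lemma Phi21: "y \<in> U \<Longrightarrow> cov1 g Kf y 2 1 = - cov1 g Kf y 1 2" using Phi_anti[of y 2 1] by simp

lemma pdPhi11: "y \<in> U \<Longrightarrow> pd c (\<lambda>y. cov1 g Kf y 1 1) y = 0"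
proof -
  assume y: "y \<in> U"
  have "pd c (\<lambda>y. cov1 g Kf y 1 1) y = pd c (\<lambda>y. 0) y" by (rule pd_local[OF opU y]) (rule Phi11)
  thus ?thesis by (simp add: pd_const)
qed
lemma pdPhi22: "y \<in> U \<Longrightarrow> pd c (\<lambda>y. cov1 g Kf y 2 2) y = 0"
proof -
  assume y: "y \<in> U"
  have "pd c (\<lambda>y. cov1 g Kf y 2 2) y = pd c (\<lambda>y. 0) y" by (rule pd_local[OF opU y]) (rule Phi22)
  thus ?thesis by (simp add: pd_const)
qed
lemma pdPhi21: "y \<in> U \<Longrightarrow> pd c (\<lambda>y. cov1 g Kf y 2 1) y = - pd c (\<lambda>y. cov1 g Kf y 1 2) y"
proof -
  assume y: "y \<in> U"
  have "pd c (\<lambda>y. cov1 g Kf y 2 1) y = pd c (\<lambda>y. - cov1 g Kf y 1 2) y" by (rule pd_local[OF opU y]) (rule Phi21)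
  thus ?thesis using y by (simp add: pdS_minus)
qed

lemma cP12: "y \<in> U \<Longrightarrow> cov2 g (cov1 g Kf) y c 1 2 = pd c (\<lambda>y. cov1 g Kf y 1 2) y - (christ g y 1 c 1 + christ g y 2 c 2) * cov1 g Kf y 1 2"
  unfolding cov2_def by (simp only: sum_2 Phi11 Phi22 Phi21) (simp add: algebra_simps)
lemma cP21: "y \<in> U \<Longrightarrow> cov2 g (cov1 g Kf) y c 2 1 = - cov2 g (cov1 g Kf) y c 1 2"
  unfolding cov2_def by (simp only: sum_2 Phi11 Phi22 Phi21 pdPhi21)
lemma cP11: "y \<in> U \<Longrightarrow> cov2 g (cov1 g Kf) y c 1 1 = 0"
  unfolding cov2_def by (simp only: sum_2 Phi11 Phi22 Phi21 pdPhi11)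
lemma cP22: "y \<in> U \<Longrightarrow> cov2 g (cov1 g Kf) y c 2 2 = 0"
  unfolding cov2_def by (simp only: sum_2 Phi11 Phi22 Phi21 pdPhi22)

lemma R1val: "y \<in> U \<Longrightarrow> riemann g y 1 b 1 2 = scal g y / 2 * g y b 2"
proof -
  assume y: "y \<in> U"
  have "ricci g y b 2 = riemann g y 1 b 1 2"
    unfolding ricci_def by (simp add: sum_2 riemann_same)
  thus ?thesis using ric_rho[OF y, of b 2] by simp
qed
lemma R2val: "y \<in> U \<Longrightarrow> riemann g y 2 b 1 2 = - (scal g y / 2 * g y b 1)"
proof -
  assume y: "y \<in> U"
  have "ricci g y b 1 = - riemann g y 2 b 1 2"
    unfolding ricci_def by (simp add: sum_2 riemann_same, subst riemann_swap, simp)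
  thus ?thesis using ric_rho[OF y, of b 1] by simp
qed

lemma F4:
  assumes y: "y \<in> U"
  shows "pd c (\<lambda>y. cov1 g Kf y 1 2) y = (christ g y 1 c 1 + christ g y 2 c 2) * cov1 g Kf y 1 2
     + scal g y / 2 * (g y c 2 * Kf y 1 - g y c 1 * Kf y 2)"
proof -
  have KS: "\<And>e. smooth_on U (\<lambda>y. Kf y e)" by simp
  have "cov2 g (cov1 g Kf) y c 1 2 = scal g y / 2 * (g y c 2 * Kf y 1 - g y c 1 * Kf y 2)"
  proof (cases "c = 1")
    case True
    have "cov2 g (cov1 g Kf) y 1 2 1 - cov2 g (cov1 g Kf) y 2 1 1 = - (\<Sum>e\<in>UNIV. riemann g y e 1 1 2 * Kf y e)"
      by (rule ricci_identity[OF y KS])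
    hence "- cov2 g (cov1 g Kf) y 1 1 2 - 0 = - (riemann g y 1 1 1 2 * Kf y 1 + riemann g y 2 1 1 2 * Kf y 2)"
      by (simp only: cP21[OF y] cP11[OF y] sum_2)
    thus ?thesis unfolding True by (simp add: R1val[OF y] R2val[OF y] algebra_simps)
  next
    case False
    hence c: "c = 2" using exhaust_2[of c] by blast
    have "cov2 g (cov1 g Kf) y 1 2 2 - cov2 g (cov1 g Kf) y 2 1 2 = - (\<Sum>e\<in>UNIV. riemann g y e 2 1 2 * Kf y e)"
      by (rule ricci_identity[OF y KS])
    hence "0 - cov2 g (cov1 g Kf) y 2 1 2 = - (riemann g y 1 2 1 2 * Kf y 1 + riemann g y 2 2 1 2 * Kf y 2)"
      by (simp only: cP22[OF y] sum_2)
    thus ?thesis unfolding c by (simp add: R1val[OF y] R2val[OF y] algebra_simps)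
  qed
  thus ?thesis unfolding cP12[OF y] by (simp add: algebra_simps)
qed

lemma gdet_pd: "y \<in> U \<Longrightarrow> pd c (gdet g) y = pd c (\<lambda>y. g y 1 1) y * g y 2 2 + g y 1 1 * pd c (\<lambda>y. g y 2 2) y
    - pd c (\<lambda>y. g y 1 2) y * g y 2 1 - g y 1 2 * pd c (\<lambda>y. g y 2 1) y"
  unfolding gdet_def[abs_def] by (simp add: pdS)

lemma trdet:
  assumes y: "y \<in> U"
  shows "christ g y 1 c 1 + christ g y 2 c 2 = pd c (gdet g) y / (2 * gdet g y)"
proof -
  have dn: "g y 1 1 * g y 2 2 - g y 1 2 * g y 2 1 \<noteq> 0" using det_nz[OF y] unfolding gdet_def .
  have "(\<Sum>e\<in>UNIV. christ g y e c e) = pd c (gdet g) y / (2 * gdet g y)"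
    unfolding christ_def gdet_pd[OF y]
    by (rule tr_alg[where G = "g y" and H = "ginv g y" and D = "\<lambda>a b c. pd a (\<lambda>y. g y b c) y" and d = "gdet g y",
          unfolded gdet_def[symmetric]])
       (use dn in \<open>auto simp: gsym[OF y] pdg_sym[OF y] gdet_def ginv_eqU[OF y] ginvE_simps\<close>)
  thus ?thesis by (simp add: sum_2)
qed


lemma pdS_div: "smooth_on U f \<Longrightarrow> smooth_on U h \<Longrightarrow> x \<in> U \<Longrightarrow> h x \<noteq> 0 \<Longrightarrow>
   pd i (\<lambda>y. f y / h y) x = (pd i f x * h x - f x * pd i h x) / (h x * h x)"
  by (rule pd_divide; (rule sm_at[OF opU])?)

lemma gdet_smI[simp]: "smooth_on U (gdet g)" by (rule gdet_sm)

lemma scal_K: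
  assumes x: "x \<in> U"
  shows "(\<Sum>a\<in>UNIV. raise g Kf x a * pd a (scal g) x) = 0"
proof -
  define \<phi> where "\<phi> = (\<lambda>y. cov1 g Kf y 1 2)"
  define Q where "Q c y = pd c (gdet g) y / (2 * gdet g y)" for c y
  define V where "V c y = g y c 2 * Kf y 1 - g y c 1 * Kf y 2" for c y
  define \<psi> where "\<psi> c y = Q c y * \<phi> y + (1/2) * scal g y * V c y" for c y
  have sm\<phi>: "smooth_on U \<phi>" unfolding \<phi>_def by simp
  have smQ: "smooth_on U (Q c)" for c
  proof -
    have "smooth_on U (\<lambda>y. pd c (gdet g) y / (2 * gdet g y))"
      by (rule sm_div[OF opU]) (simp_all add: det_nz)
    thus ?thesis unfolding Q_def[abs_def] .
  qed
  have smV: "smooth_on U (V c)" for c unfolding V_def[abs_def] by simp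
  have eq: "pd c \<phi> y = \<psi> c y" if y: "y \<in> U" for c y
    unfolding \<phi>_def \<psi>_def Q_def V_def F4[OF y] trdet[OF y, symmetric] by (simp add: algebra_simps)
  have sw: "pd 1 (pd 2 \<phi>) x = pd 2 (pd 1 \<phi>) x" by (rule schwarz[OF opU sm\<phi> x])
  have l1: "pd 1 (pd 2 \<phi>) x = pd 1 (\<psi> 2) x" by (rule pd_local[OF opU x]) (rule eq)
  have l2: "pd 2 (pd 1 \<phi>) x = pd 2 (\<psi> 1) x" by (rule pd_local[OF opU x]) (rule eq)
  have e: "pd c (\<psi> c') x = pd c (Q c') x * \<phi> x + Q c' x * pd c \<phi> x
      + (1/2) * (pd c (scal g) x * V c' x + scal g x * pd c (V c') x)" for c c'
  proof -
    have "pd c (\<psi> c') x = pd c (\<lambda>y. Q c' y * \<phi> y + (1/2) * scal g y * V c' y) x"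
      unfolding \<psi>_def[abs_def] ..
    also have "\<dots> = pd c (Q c') x * \<phi> x + Q c' x * pd c \<phi> x
      + (1/2) * (pd c (scal g) x * V c' x + scal g x * pd c (V c') x)"
      by (simp only: pdS x smQ sm\<phi> smV sm_addI sm_multI sm_constI scal_sm) (simp add: algebra_simps)
    finally show ?thesis .
  qed
  have pQ: "pd 1 (Q 2) x = pd 2 (Q 1) x"
  proof -
    have d: "2 * gdet g x \<noteq> 0" using det_nz[OF x] by simp
    have s2: "smooth_on U (\<lambda>y. 2 * gdet g y)" by simp
    have "pd c (Q c') x = (pd c (pd c' (gdet g)) x * (2 * gdet g x) - pd c' (gdet g) x * (2 * pd c (gdet g) x))
        / ((2 * gdet g x) * (2 * gdet g x))" for c c'
      unfolding Q_def[abs_def] using pdS_div[OF sm_pdI[OF gdet_smI] s2 x d] x by (simp add: pdS)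
    thus ?thesis using schwarz[OF opU gdet_sm x, of 1 2] by (simp add: algebra_simps)
  qed
  have pV: "pd c (V c') x = pd c (\<lambda>y. g y c' 2) x * Kf x 1 + g x c' 2 * pd c (\<lambda>y. Kf y 1) x
     - (pd c (\<lambda>y. g y c' 1) x * Kf x 2 + g x c' 1 * pd c (\<lambda>y. Kf y 2) x)" for c c'
  proof -
    have "pd c (V c') x = pd c (\<lambda>y. g y c' 2 * Kf y 1 - g y c' 1 * Kf y 2) x" unfolding V_def[abs_def] ..
    also have "\<dots> = pd c (\<lambda>y. g y c' 2) x * Kf x 1 + g x c' 2 * pd c (\<lambda>y. Kf y 1) x
     - (pd c (\<lambda>y. g y c' 1) x * Kf x 2 + g x c' 1 * pd c (\<lambda>y. Kf y 2) x)"
      by (simp only: pdS x g_sm Kf_sm sm_multI sm_diffI)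
    finally show ?thesis .
  qed
  have dn: "g x 1 1 * g x 2 2 - g x 1 2 * g x 2 1 \<noteq> 0" using det_nz[OF x] unfolding gdet_def .
  have dv: "pd 1 (V 2) x - pd 2 (V 1) x - (\<Sum>e\<in>UNIV. christ g x e 1 e) * V 2 x + (\<Sum>e\<in>UNIV. christ g x e 2 e) * V 1 x
      = gdet g x * (\<Sum>a\<in>UNIV. \<Sum>b\<in>UNIV. ginv g x a b * cov1 g Kf x a b)"
    unfolding pV V_def cov1_def christ_def
    by (rule div_alg[where G = "g x" and H = "ginv g x" and D = "\<lambda>a b c. pd a (\<lambda>y. g y b c) x" and d = "gdet g x"
          and K = "Kf x" and DK = "\<lambda>a b. pd a (\<lambda>y. Kf y b) x", unfolded gdet_def[symmetric]])
       (use dn in \<open>auto simp: gsym[OF x] pdg_sym[OF x] gdet_def ginv_eqU[OF x] ginvE_simps\<close>)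
  have z: "(\<Sum>a\<in>UNIV. \<Sum>b\<in>UNIV. ginv g x a b * cov1 g Kf x a b) = 0"
    using x by (simp add: sum_2 Phi11 Phi22 Phi21 ginv_eqU ginvE_simps gsym[OF x, of 2 1])
  have tr: "(\<Sum>e\<in>UNIV. christ g x e c e) = Q c x" for c
    unfolding Q_def sum_2 by (rule trdet[OF x])
  have dv0: "pd 1 (V 2) x - pd 2 (V 1) x - Q 1 x * V 2 x + Q 2 x * V 1 x = 0"
    using dv z unfolding tr by simp
  have main: "pd 1 (scal g) x * V 2 x - pd 2 (scal g) x * V 1 x
      = 2 * (pd 1 (\<psi> 2) x - pd 2 (\<psi> 1) x) - scal g x * (pd 1 (V 2) x - pd 2 (V 1) x - Q 1 x * V 2 x + Q 2 x * V 1 x)"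
    unfolding e pQ eq[OF x] \<psi>_def by (simp add: algebra_simps)
  have m0: "pd 1 (scal g) x * V 2 x - pd 2 (scal g) x * V 1 x = 0"
    unfolding main dv0 using sw l1 l2 by simp
  have r1: "raise g Kf x 1 = V 2 x / gdet g x" and r2: "raise g Kf x 2 = - V 1 x / gdet g x"
    unfolding raise_def V_def using x det_nz[OF x]
    by (simp_all add: sum_2 ginv_eqU ginvE_simps gsym[OF x, of 2 1] field_simps)
  show ?thesis
    unfolding sum_2 r1 r2 using m0 det_nz[OF x] by (simp add: field_simps)
qed

lemma second_id:
  assumes x: "x \<in> U"
  shows "(scal g x - 2 * lam / 3) * (\<Sum>a\<in>UNIV. raise g Kf x a * pd a Gam x) = 0"
proof -
  define k where "k a = raise g Kf x a" for a
  define c where "c a b = cov1 g X x a b" for a b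
  have f1: "(scal g x - 2 * lam / 3) * pd 1 Gam x + (2 * Gam x / 3) * pd 1 (scal g) x
      = 2 * (k 1 * ((1/2) * (c 1 1 - c 1 1)) + k 2 * ((1/2) * (c 1 2 - c 2 1)))"
    using first_id[OF x, of 1] unfolding k_def c_def sum_2 .
  have f2: "(scal g x - 2 * lam / 3) * pd 2 Gam x + (2 * Gam x / 3) * pd 2 (scal g) x
      = 2 * (k 1 * ((1/2) * (c 2 1 - c 1 2)) + k 2 * ((1/2) * (c 2 2 - c 2 2)))"
    using first_id[OF x, of 2] unfolding k_def c_def sum_2 .
  have sk: "k 1 * pd 1 (scal g) x + k 2 * pd 2 (scal g) x = 0"
    using scal_K[OF x] unfolding k_def sum_2 .
  have "k 1 * ((scal g x - 2 * lam / 3) * pd 1 Gam x + (2 * Gam x / 3) * pd 1 (scal g) x)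
      + k 2 * ((scal g x - 2 * lam / 3) * pd 2 Gam x + (2 * Gam x / 3) * pd 2 (scal g) x) = 0"
    unfolding f1 f2 by (simp add: algebra_simps)
  hence "(scal g x - 2 * lam / 3) * (k 1 * pd 1 Gam x + k 2 * pd 2 Gam x)
      + (2 * Gam x / 3) * (k 1 * pd 1 (scal g) x + k 2 * pd 2 (scal g) x) = 0"
    by (simp add: algebra_simps)
  hence "(scal g x - 2 * lam / 3) * (k 1 * pd 1 Gam x + k 2 * pd 2 Gam x) = 0"
    unfolding sk by simp
  thus ?thesis unfolding k_def sum_2 .
qed

end

theorem mainTheorem6:
  fixes U :: "(real^2) set"
    and g :: "real^2 \<Rightarrow> 2 \<Rightarrow> 2 \<Rightarrow> real"
    and X :: "real^2 \<Rightarrow> 2 \<Rightarrow> real"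
    and Gam :: "real^2 \<Rightarrow> real"
    and lam :: real
  assumes metric: "riem_metric U g"
    and X_smooth: "\<forall>a. smooth_on U (\<lambda>x. X x a)"
    and einstein: "\<forall>x\<in>U. \<forall>a b. ricci g x a b
        = (1/2) * X x a * X x b - (1/2) * (cov1 g X x a b + cov1 g X x b a) + lam * g x a b"
    and Gam_smooth: "smooth_on U Gam"
    and Gam_pos: "\<forall>x\<in>U. Gam x > 0"
    and Kill: "killing U g (\<lambda>x a. Gam x * X x a + pd a Gam x)"
  shows "(\<forall>x\<in>U. \<forall>d.
           (scal g x - 2 * lam / 3) * pd d Gam x + (2 * Gam x / 3) * pd d (scal g) x
           = 2 * (\<Sum>b\<in>UNIV. raise g (\<lambda>y a. Gam y * X y a + pd a Gam y) x b
                    * ((1/2) * (cov1 g X x d b - cov1 g X x b d)))) \<and>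
         (\<forall>x\<in>U. (scal g x - 2 * lam / 3)
           * (\<Sum>a\<in>UNIV. raise g (\<lambda>y a. Gam y * X y a + pd a Gam y) x a * pd a Gam x) = 0)"
proof -
  interpret Main2 U g X Gam lam
    using metric X_smooth einstein Gam_smooth Gam_pos Kill by unfold_locales auto
  show ?thesis using first_id second_id by blast
qed

end
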